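(* (i) Let $f^n:\mathfrak{P} \times \Omega \to \mathbb{R}^d$, $n\in\mathbb N$, be $\mathcal B(\mathfrak P)\otimes\mathcal F$-measurable functions such that $\sup_{n \in \mathbb{N}} \Vert f^n(P,\cdot) \Vert_{L^2(P)}<\infty$ for all $P \in \mathfrak{P}$. Then there exist measurable functions $P\mapsto N_n^P \in \{n,n+1,\dots\}$ and $P\mapsto \lambda_i^{P,n}\in [0,1]$ satisfying $\sum_{i=n}^{N^P_n} \lambda_i^{P,n}=1$ and $\lambda^{P,n}_i=0$ for $i \notin \{n,\dots,N^P_n\}$ such that \[ (P,\omega)\mapsto g^{P,n}(\omega):= \sum_{i=n}^{N^P_n} \lambda^{P,n}_i\,f^{i}(P,\omega) \in \operatorname{conv}\{f^n(P,\omega),f^{n+1}(P,\omega),\dots\} \] is measurable and $(g^{P,n})_{n\in\mathbb{N}}$ converges in $L^2(P)$ for all $P\in\mathfrak{P}$. (ii) For each $m \in \mathbb{N}$, let $(f_m^n)_{n \in \mathbb{N}}$ be a sequence as in (i). Then there exist $N_n^P$ and $\lambda^{P,n}_i$ as in (i) (not depending on $m$) such that $(P,\omega)\mapsto g^{P,n}_m(\omega):= \sum_{i=n}^{N^P_n} \lambda^{P,n}_i\,f^i_m(P,\omega)$ is measurable and $(g^{P,n}_m)_{n\in\mathbb{N}}$ converges in $L^2(P)$ for all $P\in\mathfrak{P}$ and $m\in\mathbb{N}$. (iii) Let $f^n:\mathfrak{P} \times \Omega \to \mathbb{R}^d$ be measurable functions such that $\{f^n(P,\cdot)\}_{n\in\mathbb{N}}\subseteq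 L^1(P)$ is uniformly integrable for each $P\in\mathfrak{P}$. Then the assertion of (i) holds with convergence in $L^1(P)$ instead of $L^2(P)$.
   Context: $\Omega$ is a separable metric space with Borel $\sigma$-field $\mathcal{F}$; $\mathfrak{P}(\Omega)$ is the set of probability measures on $(\Omega,\mathcal F)$ with the Borel $\sigma$-field of weak convergence, and $\mathfrak{P}\subseteq\mathfrak{P}(\Omega)$ is a fixed measurable set. $\operatorname{conv}A$ denotes the convex hull of $A\subseteq\mathbb R^d$. *)

theory Defs
  imports "HOL-Probability.Probability"
begin

definition PM :: "('a::topological_space) measure set \<Rightarrow> 'a measure measure" where
  "PM Ps = restrict_space (prob_algebra (borel :: 'a measure)) Ps"

definition conv_weights ::
  "('a::topological_space) measure set \<Rightarrow> (nat \<Rightarrow> 'a measure \<Rightarrow> nat)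
     \<Rightarrow> (nat \<Rightarrow> nat \<Rightarrow> 'a measure \<Rightarrow> real) \<Rightarrow> bool" where
  "conv_weights Ps N lam \<longleftrightarrow>
     (\<forall>n. N n \<in> measurable (PM Ps) (count_space UNIV)) \<and>
     (\<forall>n i. lam n i \<in> borel_measurable (PM Ps)) \<and>
     (\<forall>n. \<forall>P\<in>Ps. n \<le> N n P \<and> (\<forall>i. 0 \<le> lam n i P \<and> lam n i P \<le> 1) \<and>
        (\<Sum>i=n..N n P. lam n i P) = 1 \<and> (\<forall>i. i \<notin> {n..N n P} \<longrightarrow> lam n i P = 0))"

definition conv_comb ::
  "(nat \<Rightarrow> 'm \<Rightarrow> nat) \<Rightarrow> (nat \<Rightarrow> nat \<Rightarrow> 'm \<Rightarrow> real) \<Rightarrow> (nat \<Rightarrow> 'm \<Rightarrow> 'a \<Rightarrow> 'b::real_vector)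
     \<Rightarrow> nat \<Rightarrow> 'm \<Rightarrow> 'a \<Rightarrow> 'b" where
  "conv_comb N lam f n P \<omega> = (\<Sum>i=n..N n P. lam n i P *\<^sub>R f i P \<omega>)"

definition Lp_convergent :: "real \<Rightarrow> 'a measure \<Rightarrow> (nat \<Rightarrow> 'a \<Rightarrow> 'b::real_normed_vector) \<Rightarrow> bool" where
  "Lp_convergent p P g \<longleftrightarrow>
     (\<exists>h \<in> borel_measurable P. (\<integral>\<^sup>+\<omega>. ennreal (norm (h \<omega>) powr p) \<partial>P) < \<infinity> \<and>
        (\<lambda>n. \<integral>\<^sup>+\<omega>. ennreal (norm (g n \<omega> - h \<omega>) powr p) \<partial>P) \<longlonglongrightarrow> 0)"

definition unif_integrable :: "'a measure \<Rightarrow> (nat \<Rightarrow> 'a \<Rightarrow> 'b::{banach, second_countable_topology}) \<Rightarrow> bool" where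
  "unif_integrable P F \<longleftrightarrow> (\<forall>n. integrable P (F n)) \<and>
     ((\<lambda>K::real. SUP n. \<integral>\<^sup>+\<omega>. indicator {x. K < norm (F n x)} \<omega> * ennreal (norm (F n \<omega>)) \<partial>P)
        \<longlongrightarrow> 0) at_top"

end

theory Submission
  imports Defs
begin


lemma quasi_tri:
  fixes a b :: "'b::real_normed_vector"
  assumes p: "p > 0"
  shows "norm (a + b) powr p \<le> 2 powr p * (norm a powr p + norm b powr p)"
proof -
  have "norm (a + b) \<le> 2 * max (norm a) (norm b)"
    using norm_triangle_ineq[of a b] by linarith
  hence "norm (a + b) powr p \<le> (2 * max (norm a) (norm b)) powr p"
    using p by (intro powr_mono2) auto
  also have "\<dots> = 2 powr p * max (norm a) (norm b) powr p"
    by (simp add: powr_mult)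
  also have "max (norm a) (norm b) powr p \<le> norm a powr p + norm b powr p"
    by (cases "norm a \<le> norm b") (auto simp: max_def)
  hence "2 powr p * max (norm a) (norm b) powr p \<le> 2 powr p * (norm a powr p + norm b powr p)"
    by (intro mult_left_mono) auto
  finally show ?thesis .
qed

lemma ennreal_tendsto_0I:
  fixes X :: "nat \<Rightarrow> ennreal"
  assumes "\<And>e::real. e > 0 \<Longrightarrow> eventually (\<lambda>n. X n \<le> ennreal e) sequentially"
  shows "X \<longlonglongrightarrow> 0"
proof (rule order_tendstoI)
  fix a :: ennreal assume "a < 0" thus "eventually (\<lambda>n. a < X n) sequentially" by simp
next
  fix a :: ennreal assume a: "0 < a"
  obtain e :: real where e: "e > 0" "ennreal e < a"
  proof (cases a)
    case (real r)
    with a have "r > 0" by (simp add: ennreal_less_zero_iff)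
    with real show ?thesis by (intro that[of "r/2"]) (auto simp: ennreal_less_iff)
  next
    case top thus ?thesis by (intro that[of 1]) auto
  qed
  show "eventually (\<lambda>n. X n < a) sequentially"
    using assms[OF e(1)] by eventually_elim (use e in auto)
qed

lemma telescope_convergent:
  fixes s :: "nat \<Rightarrow> 'b::banach"
  assumes ev: "eventually (\<lambda>k. norm (s (Suc k) - s k) \<le> (1/2)^k) sequentially"
  shows "convergent s"
proof -
  have "summable (\<lambda>k. s (Suc k) - s k)"
    by (rule summable_comparison_test_ev[OF _ summable_geometric[of "1/2::real"]])
       (use ev in auto)
  then obtain L where L: "(\<lambda>n. \<Sum>k<n. s (Suc k) - s k) \<longlonglongrightarrow> L"
    using summable_LIMSEQ by blast
  have "(\<lambda>n. s 0 + (\<Sum>k<n. s (Suc k) - s k)) \<longlonglongrightarrow> s 0 + L"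
    by (intro tendsto_intros L)
  moreover have "(\<lambda>n. s 0 + (\<Sum>k<n. s (Suc k) - s k)) = s"
    by (rule ext) (simp add: sum_lessThan_telescope)
  ultimately show ?thesis unfolding convergent_def by auto
qed

lemma Lp_complete:
  fixes g :: "nat \<Rightarrow> 'a \<Rightarrow> 'b::euclidean_space" and p :: real
  assumes p: "p > 0"
    and meas: "\<And>n. g n \<in> borel_measurable M"
    and fin: "\<And>n. (\<integral>\<^sup>+x. ennreal (norm (g n x) powr p) \<partial>M) < \<infinity>"
    and cau: "\<And>e::real. e > 0 \<Longrightarrow> \<exists>N. \<forall>m\<ge>N. \<forall>n\<ge>N.
                 (\<integral>\<^sup>+x. ennreal (norm (g m x - g n x) powr p) \<partial>M) < ennreal e"
  shows "Lp_convergent p M g"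
proof -
  define D where "D m n = (\<integral>\<^sup>+x. ennreal (norm (g m x - g n x) powr p) \<partial>M)" for m n
  define e :: "nat \<Rightarrow> real" where "e k = (1/2)^k * ((1/2)^k) powr p" for k
  have epos: "e k > 0" for k by (simp add: e_def)
  define Nk where "Nk k = (SOME N. \<forall>m\<ge>N. \<forall>n\<ge>N. D m n < ennreal (e k))" for k
  have Nk: "\<forall>m\<ge>Nk k. \<forall>n\<ge>Nk k. D m n < ennreal (e k)" for k
    unfolding Nk_def D_def by (rule someI_ex) (rule cau[OF epos])
  define r where "r = rec_nat (Nk 0) (\<lambda>k rk. max (Nk (Suc k)) (Suc rk))"
  have r0: "r 0 = Nk 0" and rS: "r (Suc k) = max (Nk (Suc k)) (Suc (r k))" for k
    by (simp_all add: r_def)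
  have rN: "Nk k \<le> r k" for k by (cases k) (auto simp: r0 rS)
  have smr: "strict_mono r" by (rule strict_monoI_Suc) (simp add: rS)
  have rge: "k \<le> r k" for k using smr by (rule strict_mono_imp_increasing)
  have Dr: "D (r (Suc k)) (r k) < ennreal (e k)" for k
  proof -
    have "r k \<le> r (Suc k)" using smr by (simp add: strict_mono_less_eq)
    thus ?thesis using Nk[of k] rN[of k] by auto
  qed
  define A where "A k = {x\<in>space M. (1/2)^k < norm (g (r (Suc k)) x - g (r k) x)}" for k
  have A_meas: "A k \<in> sets M" for k unfolding A_def using meas by measurable
  have A_bound: "emeasure M (A k) \<le> ennreal ((1/2)^k)" for k
  proof -
    define c where "c = ((1/2::real)^k) powr p"
    have c: "c > 0" by (simp add: c_def)
    have *: "indicator (A k) x \<le> ennreal (1/c) * ennreal (norm (g (r (Suc k)) x - g (r k) x) powr p)" for x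
    proof (cases "x \<in> A k")
      case True
      hence "(1/2)^k < norm (g (r (Suc k)) x - g (r k) x)" by (auto simp: A_def)
      hence "c \<le> norm (g (r (Suc k)) x - g (r k) x) powr p"
        unfolding c_def using p by (intro powr_mono2) auto
      hence "1 \<le> (1/c) * norm (g (r (Suc k)) x - g (r k) x) powr p"
        using c by (simp add: field_simps)
      thus ?thesis using True c by (simp add: ennreal_mult[symmetric] ennreal_1[symmetric] del: ennreal_1)
    qed (simp)
    have "emeasure M (A k) = (\<integral>\<^sup>+x. indicator (A k) x \<partial>M)" using A_meas by simp
    also have "\<dots> \<le> (\<integral>\<^sup>+x. ennreal (1/c) * ennreal (norm (g (r (Suc k)) x - g (r k) x) powr p) \<partial>M)"
      by (intro nn_integral_mono *)
    also have "\<dots> = ennreal (1/c) * D (r (Suc k)) (r k)"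
      unfolding D_def using meas by (intro nn_integral_cmult) measurable
    also have "\<dots> \<le> ennreal (1/c) * ennreal (e k)"
      using Dr[of k] by (intro mult_left_mono) auto
    also have "\<dots> = ennreal ((1/2)^k)"
      using c by (simp add: e_def c_def ennreal_mult[symmetric])
    finally show ?thesis .
  qed
  have A_fin: "emeasure M (A k) < \<infinity>" for k
    using A_bound[of k] by (auto simp: less_top[symmetric] top_unique)
  have A_sum: "summable (\<lambda>k. measure M (A k))"
  proof (rule summable_comparison_test'[OF summable_geometric[of "1/2::real"]])
    fix k :: nat
    have "measure M (A k) \<le> (1/2)^k"
      using A_bound[of k] A_fin[of k]
      by (simp add: emeasure_eq_ennreal_measure ennreal_le_iff[symmetric] del: ennreal_le_iff)
    thus "norm (measure M (A k)) \<le> (1/2)^k" by simp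
  qed simp
  have AEev: "AE x in M. eventually (\<lambda>k. x \<in> space M - A k) sequentially"
    by (rule borel_cantelli_AE1[OF A_meas A_fin A_sum])
  define h where "h x = lim (\<lambda>k. g (r k) x)" for x
  have h_meas: "h \<in> borel_measurable M" unfolding h_def using meas by measurable
  have AElim: "AE x in M. (\<lambda>k. g (r k) x) \<longlonglongrightarrow> h x"
    using AEev
  proof eventually_elim
    case (elim x)
    have "eventually (\<lambda>k. norm (g (r (Suc k)) x - g (r k) x) \<le> (1/2)^k) sequentially"
      using elim by eventually_elim (auto simp: A_def not_less)
    hence "convergent (\<lambda>k. g (r k) x)" by (rule telescope_convergent)
    thus ?case unfolding h_def by (simp add: convergent_LIMSEQ_iff)
  qed
  have close: "D n (r k) < ennreal e' \<Longrightarrow> True" for n k e' by simp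
  have main: "(\<integral>\<^sup>+x. ennreal (norm (g n x - h x) powr p) \<partial>M) \<le> ennreal e'"
    if e': "e' > 0" "\<forall>m\<ge>N. \<forall>n\<ge>N. D m n < ennreal e'" and nN: "n \<ge> N" for n N e'
  proof -
    have "(\<integral>\<^sup>+x. ennreal (norm (g n x - h x) powr p) \<partial>M)
        = (\<integral>\<^sup>+x. liminf (\<lambda>k. ennreal (norm (g n x - g (r k) x) powr p)) \<partial>M)"
    proof (rule nn_integral_cong_AE)
      show "AE x in M. ennreal (norm (g n x - h x) powr p) = liminf (\<lambda>k. ennreal (norm (g n x - g (r k) x) powr p))"
        using AElim
      proof eventually_elim
        case (elim x)
        have "(\<lambda>k. ennreal (norm (g n x - g (r k) x) powr p)) \<longlonglongrightarrow> ennreal (norm (g n x - h x) powr p)"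
          using p by (intro tendsto_intros elim) auto
        thus ?case by (metis lim_imp_Liminf sequentially_bot)
      qed
    qed
    also have "\<dots> \<le> liminf (\<lambda>k. D n (r k))"
      unfolding D_def using meas by (intro nn_integral_liminf) measurable
    also have "\<dots> \<le> ennreal e'"
    proof -
      have "eventually (\<lambda>k. D n (r k) \<le> ennreal e') sequentially"
        using e'(2) nN rge unfolding eventually_sequentially
        by (metis le_trans less_imp_le)
      hence "limsup (\<lambda>k. D n (r k)) \<le> ennreal e'" by (simp add: Limsup_bounded)
      moreover have "liminf (\<lambda>k. D n (r k)) \<le> limsup (\<lambda>k. D n (r k))"
        by (simp add: Liminf_le_Limsup)
      ultimately show ?thesis by simp
    qed
    finally show ?thesis .
  qed
  have conv: "(\<lambda>n. \<integral>\<^sup>+x. ennreal (norm (g n x - h x) powr p) \<partial>M) \<longlonglongrightarrow> 0"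
  proof (rule ennreal_tendsto_0I)
    fix e' :: real assume e': "e' > 0"
    then obtain N where N: "\<forall>m\<ge>N. \<forall>n\<ge>N. D m n < ennreal e'" using cau[OF e'] unfolding D_def by blast
    show "eventually (\<lambda>n. (\<integral>\<^sup>+x. ennreal (norm (g n x - h x) powr p) \<partial>M) \<le> ennreal e') sequentially"
      unfolding eventually_sequentially using main[OF e' N] by blast
  qed
  obtain N where N: "\<forall>m\<ge>N. \<forall>n\<ge>N. D m n < ennreal 1" using cau[of 1] unfolding D_def by auto
  have hN: "(\<integral>\<^sup>+x. ennreal (norm (g N x - h x) powr p) \<partial>M) \<le> ennreal 1"
    using main[OF _ N] by simp
  have "(\<integral>\<^sup>+x. ennreal (norm (h x) powr p) \<partial>M)
     \<le> (\<integral>\<^sup>+x. ennreal (2 powr p) * (ennreal (norm (g N x - h x) powr p) + ennreal (norm (g N x) powr p)) \<partial>M)"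
  proof (rule nn_integral_mono)
    fix x
    have "norm (h x) powr p = norm ((h x - g N x) + g N x) powr p" by simp
    also have "\<dots> \<le> 2 powr p * (norm (h x - g N x) powr p + norm (g N x) powr p)"
      by (rule quasi_tri[OF p])
    finally show "ennreal (norm (h x) powr p) \<le> ennreal (2 powr p) * (ennreal (norm (g N x - h x) powr p) + ennreal (norm (g N x) powr p))"
      by (simp add: ennreal_mult[symmetric] ennreal_plus[symmetric] norm_minus_commute del: ennreal_plus)
  qed
  also have "\<dots> = ennreal (2 powr p) * ((\<integral>\<^sup>+x. ennreal (norm (g N x - h x) powr p) \<partial>M) + (\<integral>\<^sup>+x. ennreal (norm (g N x) powr p) \<partial>M))"
    using meas h_meas by (subst nn_integral_cmult, measurable, subst nn_integral_add, measurable) 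
  also have "\<dots> < \<infinity>"
  proof -
    have "(\<integral>\<^sup>+x. ennreal (norm (g N x - h x) powr p) \<partial>M) < \<infinity>"
      using hN ennreal_less_top[of 1] by (simp add: le_less_trans)
    thus ?thesis using fin[of N] by (simp add: ennreal_mult_less_top)
  qed
  finally have hfin: "(\<integral>\<^sup>+x. ennreal (norm (h x) powr p) \<partial>M) < \<infinity>" .
  show ?thesis unfolding Lp_convergent_def using h_meas hfin conv by blast
qed



type_synonym cand = "nat \<times> rat list"

definition cwq :: "cand \<Rightarrow> nat \<Rightarrow> rat" where
  "cwq c i = (if fst c \<le> i \<and> i < fst c + length (snd c) then snd c ! (i - fst c) else 0)"
definition cw :: "cand \<Rightarrow> nat \<Rightarrow> real" where
  "cw c i = of_rat (cwq c i)"
definition rng :: "cand \<Rightarrow> nat set" where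
  "rng c = {fst c..<fst c + length (snd c)}"
definition valid :: "nat \<Rightarrow> cand \<Rightarrow> bool" where
  "valid n c \<longleftrightarrow> n \<le> fst c \<and> snd c \<noteq> [] \<and> (\<forall>x\<in>set (snd c). 0 \<le> x) \<and> sum_list (snd c) = 1"
definition comb :: "cand \<Rightarrow> (nat \<Rightarrow> 'a \<Rightarrow> 'b::real_vector) \<Rightarrow> 'a \<Rightarrow> 'b" where
  "comb c u \<omega> = (\<Sum>i\<in>rng c. cw c i *\<^sub>R u i \<omega>)"

lemma finite_rng[simp]: "finite (rng c)" by (simp add: rng_def)

lemma cw_out: "i \<notin> rng c \<Longrightarrow> cw c i = 0"
  by (auto simp: cw_def cwq_def rng_def)

lemma comb_super: "finite S \<Longrightarrow> rng c \<subseteq> S \<Longrightarrow> comb c u \<omega> = (\<Sum>i\<in>S. cw c i *\<^sub>R u i \<omega>)"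
  unfolding comb_def by (rule sum.mono_neutral_left) (auto simp: cw_out)

lemma cwq_sum: "(\<Sum>i\<in>rng c. cwq c i) = sum_list (snd c)"
proof -
  obtain a xs where c: "c = (a, xs)" by (cases c)
  have "(\<Sum>i\<in>rng c. cwq c i) = (\<Sum>i\<in>{0+a..<length xs+a}. xs ! (i - a))"
    by (intro sum.cong) (auto simp: c rng_def cwq_def)
  also have "\<dots> = (\<Sum>i\<in>{0..<length xs}. xs ! i)"
    by (subst sum.shift_bounds_nat_ivl) simp
  also have "\<dots> = sum_list xs" by (simp add: sum_list_sum_nth)
  finally show ?thesis by (simp add: c)
qed

lemma valid_nonneg: "valid n c \<Longrightarrow> 0 \<le> cwq c i"
  by (auto simp: valid_def cwq_def)

lemma valid_sum: "valid n c \<Longrightarrow> (\<Sum>i\<in>rng c. cw c i) = 1"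
proof -
  assume v: "valid n c"
  have "(\<Sum>i\<in>rng c. cw c i) = of_rat (\<Sum>i\<in>rng c. cwq c i)"
    by (simp add: cw_def of_rat_sum)
  thus ?thesis using v by (simp add: cwq_sum valid_def)
qed

lemma valid_cw_nonneg: "valid n c \<Longrightarrow> 0 \<le> cw c i"
  by (simp add: cw_def valid_nonneg)

lemma valid_cw_le1: "valid n c \<Longrightarrow> cw c i \<le> 1"
proof (cases "i \<in> rng c")
  case True
  assume v: "valid n c"
  have "cw c i = (\<Sum>j\<in>{i}. cw c j)" by simp
  also have "\<dots> \<le> (\<Sum>j\<in>rng c. cw c j)"
    using True by (intro sum_mono2) (auto intro: valid_cw_nonneg[OF v])
  finally show ?thesis using valid_sum[OF v] by simp
qed (simp add: cw_out)

lemma valid_mono: "valid n c \<Longrightarrow> m \<le> n \<Longrightarrow> valid m c"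
  by (auto simp: valid_def)

lemma valid_rng_ge: "valid n c \<Longrightarrow> i \<in> rng c \<Longrightarrow> n \<le> i"
  by (auto simp: valid_def rng_def)

lemma midpoint_cand:
  assumes v1: "valid n1 c1" and v2: "valid n2 c2"
  shows "\<exists>c. valid (min n1 n2) c \<and> (\<forall>i. cw c i = (cw c1 i + cw c2 i) / 2) \<and>
             rng c \<subseteq> rng c1 \<union> rng c2 \<union> {min (fst c1) (fst c2)..<max (fst c1 + length (snd c1)) (fst c2 + length (snd c2))}"
proof -
  define a where "a = min (fst c1) (fst c2)"
  define b where "b = max (fst c1 + length (snd c1)) (fst c2 + length (snd c2))"
  define xs where "xs = map (\<lambda>i. (cwq c1 i + cwq c2 i) / 2) [a..<b]"
  define c where "c = (a, xs)"
  have "0 < length (snd c1)" using v1 by (simp add: valid_def)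
  then have ab: "a < b" unfolding a_def b_def by linarith
  have lxs: "length xs = b - a" by (simp add: xs_def)
  have r1: "rng c1 \<subseteq> {a..<b}" and r2: "rng c2 \<subseteq> {a..<b}" by (auto simp: rng_def a_def b_def)
  have cwq_c: "cwq c i = (cwq c1 i + cwq c2 i) / 2" for i
  proof (cases "a \<le> i \<and> i < b")
    case True
    hence "cwq c i = xs ! (i - a)" by (simp add: cwq_def c_def lxs)
    also have "\<dots> = (cwq c1 i + cwq c2 i) / 2" 
    proof -
      have "i - a < length [a..<b]" using True by (simp add: diff_less_mono)
      hence "xs ! (i - a) = (\<lambda>i. (cwq c1 i + cwq c2 i) / 2) ([a..<b] ! (i - a))"
        unfolding xs_def by (rule nth_map)
      also have "[a..<b] ! (i - a) = i" using True by (subst nth_upt) auto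
      finally show ?thesis by simp
    qed
    finally show ?thesis .
  next
    case False
    hence "i \<notin> rng c1" "i \<notin> rng c2" using r1 r2 by auto
    hence "cwq c1 i = 0" "cwq c2 i = 0" by (auto simp: cwq_def rng_def)
    thus ?thesis using False by (auto simp: cwq_def c_def lxs)
  qed
  have sum1: "(\<Sum>i\<in>{a..<b}. cwq c1 i) = 1"
  proof -
    have "(\<Sum>i\<in>{a..<b}. cwq c1 i) = (\<Sum>i\<in>rng c1. cwq c1 i)"
      using r1 by (intro sum.mono_neutral_right) (auto simp: cwq_def rng_def)
    thus ?thesis using v1 by (simp add: cwq_sum valid_def)
  qed
  have sum2: "(\<Sum>i\<in>{a..<b}. cwq c2 i) = 1"
  proof -
    have "(\<Sum>i\<in>{a..<b}. cwq c2 i) = (\<Sum>i\<in>rng c2. cwq c2 i)"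
      using r2 by (intro sum.mono_neutral_right) (auto simp: cwq_def rng_def)
    thus ?thesis using v2 by (simp add: cwq_sum valid_def)
  qed
  have "valid (min n1 n2) c"
    unfolding valid_def
  proof (intro conjI)
    show "min n1 n2 \<le> fst c" using v1 v2 by (auto simp: valid_def c_def a_def)
    show "snd c \<noteq> []" using ab by (simp add: c_def xs_def)
    show "\<forall>x\<in>set (snd c). 0 \<le> x"
      using valid_nonneg[OF v1] valid_nonneg[OF v2] by (auto simp: c_def xs_def)
    have "sum_list (snd c) = (\<Sum>i\<in>set [a..<b]. (cwq c1 i + cwq c2 i) / 2)"
      by (simp add: c_def xs_def sum_set_upt_conv_sum_list_nat[symmetric] del: set_upt)
    also have "\<dots> = ((\<Sum>i\<in>{a..<b}. cwq c1 i) + (\<Sum>i\<in>{a..<b}. cwq c2 i)) / 2"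
      by (simp only: sum.distrib sum_divide_distrib[symmetric] set_upt)
    also have "\<dots> = 1" by (simp add: sum1 sum2)
    finally show "sum_list (snd c) = 1" .
  qed
  moreover have "\<forall>i. cw c i = (cw c1 i + cw c2 i) / 2"
    by (simp add: cw_def cwq_c of_rat_add of_rat_divide)
  moreover have "rng c \<subseteq> {a..<b}" by (auto simp: rng_def c_def lxs)
  ultimately show ?thesis unfolding a_def b_def by blast
qed

lemma comb_mid:
  assumes "\<forall>i. cw c i = (cw c1 i + cw c2 i) / 2"
      and "rng c \<subseteq> rng c1 \<union> rng c2 \<union> R" "finite R"
  shows "comb c u \<omega> = (1/2) *\<^sub>R (comb c1 u \<omega> + comb c2 u \<omega>)"
proof -
  let ?S = "rng c \<union> rng c1 \<union> rng c2"
  have "comb c u \<omega> = (\<Sum>i\<in>?S. cw c i *\<^sub>R u i \<omega>)" by (rule comb_super) auto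
  also have "\<dots> = (\<Sum>i\<in>?S. (1/2) *\<^sub>R (cw c1 i *\<^sub>R u i \<omega>) + (1/2) *\<^sub>R (cw c2 i *\<^sub>R u i \<omega>))"
  proof (rule sum.cong[OF refl])
    fix i
    have "cw c i = (1/2) * cw c1 i + (1/2) * cw c2 i" using assms(1) by (simp add: field_simps)
    thus "cw c i *\<^sub>R u i \<omega> = (1/2) *\<^sub>R (cw c1 i *\<^sub>R u i \<omega>) + (1/2) *\<^sub>R (cw c2 i *\<^sub>R u i \<omega>)"
      by (simp add: scaleR_add_left)
  qed
  also have "\<dots> = (1/2) *\<^sub>R ((\<Sum>i\<in>?S. cw c1 i *\<^sub>R u i \<omega>) + (\<Sum>i\<in>?S. cw c2 i *\<^sub>R u i \<omega>))"
    by (simp add: sum.distrib scaleR_sum_right scaleR_add_right)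
  also have "(\<Sum>i\<in>?S. cw c1 i *\<^sub>R u i \<omega>) = comb c1 u \<omega>" by (rule comb_super[symmetric]) auto
  also have "(\<Sum>i\<in>?S. cw c2 i *\<^sub>R u i \<omega>) = comb c2 u \<omega>" by (rule comb_super[symmetric]) auto
  finally show ?thesis .
qed

lemma comb_norm2:
  assumes v: "valid n c"
  shows "(norm (comb c u \<omega>))^2 \<le> (\<Sum>i\<in>rng c. cw c i * (norm (u i \<omega>))^2)"
proof -
  have ne: "rng c \<noteq> {}" using v by (auto simp: valid_def rng_def)
  have "norm (comb c u \<omega>) \<le> (\<Sum>i\<in>rng c. norm (cw c i *\<^sub>R u i \<omega>))"
    unfolding comb_def by (rule norm_sum)
  also have "\<dots> = (\<Sum>i\<in>rng c. cw c i * norm (u i \<omega>))"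
    using valid_cw_nonneg[OF v] by (simp add: abs_of_nonneg)
  finally have "norm (comb c u \<omega>) \<le> (\<Sum>i\<in>rng c. cw c i * norm (u i \<omega>))" .
  hence "(norm (comb c u \<omega>))^2 \<le> (\<Sum>i\<in>rng c. cw c i * norm (u i \<omega>))^2"
    by (intro power_mono) auto
  also have "\<dots> \<le> (\<Sum>i\<in>rng c. cw c i * (norm (u i \<omega>))^2)"
    using convex_on_sum[OF finite_rng ne convex_power2 valid_sum[OF v], of "\<lambda>i. norm (u i \<omega>)"]
      valid_cw_nonneg[OF v] by simp
  finally show ?thesis .
qed



lemma space_PM: "Ps \<in> sets (prob_algebra borel) \<Longrightarrow> space (PM Ps) = Ps"
  unfolding PM_def using sets.sets_into_space by (auto simp: space_restrict_space)

lemma PM_probD: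
  assumes "Ps \<in> sets (prob_algebra (borel::'a::topological_space measure))" "P \<in> Ps"
  shows "prob_space P" "sets P = sets (borel::'a measure)"
proof -
  have "P \<in> space (prob_algebra (borel::'a measure))" using assms sets.sets_into_space by blast
  thus "prob_space P" "sets P = sets (borel::'a measure)" by (auto simp: space_prob_algebra)
qed

lemma id_PM_subprob: "(\<lambda>P. P) \<in> measurable (PM Ps) (subprob_algebra borel)"
  unfolding PM_def by (intro measurable_restrict_space1 measurable_prob_algebraD measurable_ident_sets) simp

lemma kernel_meas:
  assumes "(\<lambda>(P, \<omega>). F P \<omega>) \<in> borel_measurable (PM Ps \<Otimes>\<^sub>M borel)"
  shows "(\<lambda>P. \<integral>\<^sup>+\<omega>. F P \<omega> \<partial>P) \<in> borel_measurable (PM Ps)"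
  using nn_integral_measurable_subprob_algebra2[OF assms id_PM_subprob] .

lemma slice_meas:
  assumes Ps: "Ps \<in> sets (prob_algebra (borel::'a::topological_space measure))" and P: "P \<in> Ps"
    and F: "(\<lambda>(P, \<omega>). F P \<omega>) \<in> borel_measurable (PM Ps \<Otimes>\<^sub>M (borel::'a measure))"
  shows "F P \<in> borel_measurable P"
proof -
  have "(\<lambda>y. (\<lambda>(P, \<omega>). F P \<omega>) (P, y)) \<in> borel_measurable (borel::'a measure)"
    by (rule measurable_Pair2[OF F]) (simp add: space_PM[OF Ps] P)
  hence "F P \<in> borel_measurable (borel::'a measure)" by simp
  thus ?thesis by (subst measurable_cong_sets[OF PM_probD(2)[OF Ps P] refl])
qed

lemma conv_meas:
  assumes cw: "conv_weights Ps N lam"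
    and f: "\<And>i. (\<lambda>(P, \<omega>). f i P \<omega>) \<in> borel_measurable (PM Ps \<Otimes>\<^sub>M (borel::'a::topological_space measure))"
  shows "(\<lambda>(P, \<omega>). (conv_comb N lam f n P \<omega> :: 'b::euclidean_space)) \<in> borel_measurable (PM Ps \<Otimes>\<^sub>M (borel::'a measure))"
proof -
  have Nm: "(\<lambda>x. N n (fst x)) \<in> measurable (PM Ps \<Otimes>\<^sub>M (borel::'a measure)) (count_space UNIV)"
    using cw unfolding conv_weights_def by (intro measurable_compose[OF measurable_fst]) auto
  have lm[measurable]: "(\<lambda>x. lam n i (fst x)) \<in> borel_measurable (PM Ps \<Otimes>\<^sub>M (borel::'a measure))" for i
    using cw unfolding conv_weights_def by (intro measurable_compose[OF measurable_fst]) auto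
  have fm[measurable]: "(\<lambda>x. f i (fst x) (snd x)) \<in> borel_measurable (PM Ps \<Otimes>\<^sub>M (borel::'a measure))" for i
    using f[of i] by (simp add: split_beta')
  have "(\<lambda>x. (\<lambda>k x. \<Sum>i=n..k. lam n i (fst x) *\<^sub>R f i (fst x) (snd x)) (N n (fst x)) x)
        \<in> borel_measurable (PM Ps \<Otimes>\<^sub>M (borel::'a measure))"
    by (rule measurable_compose_countable[OF _ Nm]) measurable
  thus ?thesis by (simp add: conv_comb_def split_beta')
qed

lemma conv_hull:
  assumes cw: "conv_weights Ps N lam" and P: "P \<in> Ps"
  shows "conv_comb N lam f n P \<omega> \<in> convex hull {f i P \<omega> | i. n \<le> i}"
  unfolding conv_comb_def
proof (rule convex_sum)
  show "(\<Sum>i=n..N n P. lam n i P) = 1" "\<And>i. i \<in> {n..N n P} \<Longrightarrow> 0 \<le> lam n i P"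
    using cw P unfolding conv_weights_def by auto
  show "\<And>i. i \<in> {n..N n P} \<Longrightarrow> f i P \<omega> \<in> convex hull {f i P \<omega> | i. n \<le> i}"
    by (rule hull_inc) auto
qed auto



lemma par_law:
  fixes x y :: "'b::real_inner"
  shows "(norm ((1/2) *\<^sub>R (x - y)))^2 + (norm ((1/2) *\<^sub>R (x + y)))^2 = ((norm x)^2 + (norm y)^2) / 2"
  by (simp add: power2_norm_eq_inner inner_add_left inner_add_right inner_diff_left inner_diff_right
      inner_commute[of y x] power_mult_distrib field_simps)

lemma ennreal_par:
  fixes x y :: "'b::real_inner"
  shows "ennreal ((norm ((1/2) *\<^sub>R (x - y)))\<^sup>2) + ennreal ((norm ((1/2) *\<^sub>R (x + y)))\<^sup>2)
       = ennreal (1/2) * (ennreal ((norm x)\<^sup>2) + ennreal ((norm y)\<^sup>2))"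
proof -
  have "ennreal ((norm ((1/2) *\<^sub>R (x - y)))\<^sup>2) + ennreal ((norm ((1/2) *\<^sub>R (x + y)))\<^sup>2)
      = ennreal ((norm ((1/2) *\<^sub>R (x - y)))\<^sup>2 + (norm ((1/2) *\<^sub>R (x + y)))\<^sup>2)"
    by (rule ennreal_plus[symmetric]) auto
  also have "(norm ((1/2) *\<^sub>R (x - y)))\<^sup>2 + (norm ((1/2) *\<^sub>R (x + y)))\<^sup>2 = (1/2) * ((norm x)\<^sup>2 + (norm y)\<^sup>2)"
    using par_law[of x y] by simp
  also have "ennreal ((1/2) * ((norm x)\<^sup>2 + (norm y)\<^sup>2)) = ennreal (1/2) * ennreal ((norm x)\<^sup>2 + (norm y)\<^sup>2)"
    by (rule ennreal_mult) auto
  also have "ennreal ((norm x)\<^sup>2 + (norm y)\<^sup>2) = ennreal ((norm x)\<^sup>2) + ennreal ((norm y)\<^sup>2)"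
    by (rule ennreal_plus) auto
  finally show ?thesis .
qed

lemma norm_powr2: "norm x powr 2 = (norm x)^2"
  by (simp add: powr_numeral)

lemma part_ii:
  fixes Ps :: "('a::{metric_space, second_countable_topology}) measure set"
    and f :: "nat \<Rightarrow> nat \<Rightarrow> 'a measure \<Rightarrow> 'a \<Rightarrow> 'b::euclidean_space"
  assumes Ps: "Ps \<in> sets (prob_algebra (borel :: 'a measure))"
    and fmeas: "\<And>m n. (\<lambda>(P, \<omega>). f m n P \<omega>) \<in> borel_measurable (PM Ps \<Otimes>\<^sub>M (borel :: 'a measure))"
    and fbd: "\<And>m P. P \<in> Ps \<Longrightarrow> (SUP n. \<integral>\<^sup>+\<omega>. ennreal ((norm (f m n P \<omega>))\<^sup>2) \<partial>P) < \<infinity>"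
  shows "\<exists>N lam. conv_weights Ps N lam \<and> (\<forall>m. \<forall>P\<in>Ps. Lp_convergent 2 P (\<lambda>n. conv_comb N lam (f m) n P))"
proof -
  let ?M = "PM Ps"
  have fm[measurable]: "(\<lambda>x. f m n (fst x) (snd x)) \<in> borel_measurable (?M \<Otimes>\<^sub>M borel)" for m n
    using fmeas[of m n] by (simp add: split_beta')
  define S where "S m P = (SUP n. \<integral>\<^sup>+\<omega>. ennreal ((norm (f m n P \<omega>))\<^sup>2) \<partial>P)" for m P
  define cm where "cm m P = 1 / (2^m * (1 + enn2real (S m P)))" for m P
  define Q where "Q m P c = (\<integral>\<^sup>+\<omega>. ennreal ((norm (comb c (\<lambda>i. f m i P) \<omega>))\<^sup>2) \<partial>P)" for m P c
  define \<Psi> where "\<Psi> P c = (\<Sum>m. ennreal (cm m P) * Q m P c)" for P c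
  define \<Psi>v where "\<Psi>v n P k = (if valid n (from_nat k) then \<Psi> P (from_nat k) else \<top>)" for n P k
  define A where "A n P = (INF k. \<Psi>v n P k)" for n P
  define sel where "sel n P = (LEAST k. valid n (from_nat k) \<and> \<Psi> P (from_nat k) \<le> A n P + ennreal (1 / (real n + 1)))" for n P
  define best :: "nat \<Rightarrow> 'a measure \<Rightarrow> cand" where "best n P = from_nat (sel n P)" for n P
  define N where "N n P = fst (best n P) + length (snd (best n P)) - 1" for n P
  define lam where "lam n i P = cw (best n P) i" for n i P

  have Sm[measurable]: "(\<lambda>P. S m P) \<in> borel_measurable ?M" for m
    unfolding S_def by (intro borel_measurable_SUP kernel_meas) measurable
  have Qm[measurable]: "(\<lambda>P. Q m P c) \<in> borel_measurable ?M" for m c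
    unfolding Q_def comb_def by (rule kernel_meas) measurable
  have cmm[measurable]: "(\<lambda>P. cm m P) \<in> borel_measurable ?M" for m
    unfolding cm_def by measurable
  have \<Psi>m[measurable]: "(\<lambda>P. \<Psi> P c) \<in> borel_measurable ?M" for c
    unfolding \<Psi>_def by measurable
  have Am[measurable]: "(\<lambda>P. A n P) \<in> borel_measurable ?M" for n
    unfolding A_def \<Psi>v_def by measurable
  have selm: "sel n \<in> measurable ?M (count_space UNIV)" for n
    unfolding sel_def by measurable
  have selc: "(\<lambda>P. h (sel n P)) \<in> measurable ?M X" if "\<And>k. h k \<in> space X" for n h and X :: "'c measure"
    by (rule measurable_compose[OF selm]) (simp add: measurable_count_space_eq1 that)

  have fPm: "f m i P \<in> borel_measurable P" if P: "P \<in> Ps" for m i P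
    using slice_meas[OF Ps P fmeas[of m i]] by simp
  have combm: "comb c (\<lambda>i. f m i P) \<in> borel_measurable P" if P: "P \<in> Ps" for m c P
    unfolding comb_def using fPm[OF P] by measurable
  have Sfin: "S m P < \<infinity>" if "P \<in> Ps" for m P
    unfolding S_def using fbd[OF that] .
  have Qle: "Q m P c \<le> S m P" if P: "P \<in> Ps" and v: "valid n c" for m P c n
  proof -
    note fPm[OF P, measurable]
    have "Q m P c \<le> (\<integral>\<^sup>+\<omega>. (\<Sum>i\<in>rng c. ennreal (cw c i) * ennreal ((norm (f m i P \<omega>))\<^sup>2)) \<partial>P)"
      unfolding Q_def
    proof (rule nn_integral_mono)
      fix \<omega>
      have "(norm (comb c (\<lambda>i. f m i P) \<omega>))\<^sup>2 \<le> (\<Sum>i\<in>rng c. cw c i * (norm (f m i P \<omega>))\<^sup>2)"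
        by (rule comb_norm2[OF v])
      thus "ennreal ((norm (comb c (\<lambda>i. f m i P) \<omega>))\<^sup>2) \<le> (\<Sum>i\<in>rng c. ennreal (cw c i) * ennreal ((norm (f m i P \<omega>))\<^sup>2))"
        using valid_cw_nonneg[OF v] by (simp add: ennreal_mult[symmetric] ennreal_leI)
    qed
    also have "\<dots> = (\<Sum>i\<in>rng c. \<integral>\<^sup>+\<omega>. ennreal (cw c i) * ennreal ((norm (f m i P \<omega>))\<^sup>2) \<partial>P)"
      by (rule nn_integral_sum) measurable
    also have "\<dots> = (\<Sum>i\<in>rng c. ennreal (cw c i) * \<integral>\<^sup>+\<omega>. ennreal ((norm (f m i P \<omega>))\<^sup>2) \<partial>P)"
      by (intro sum.cong refl nn_integral_cmult) measurable
    also have "\<dots> \<le> (\<Sum>i\<in>rng c. ennreal (cw c i) * S m P)"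
      unfolding S_def by (intro sum_mono mult_left_mono) (auto intro: SUP_upper)
    also have "\<dots> = ennreal (\<Sum>i\<in>rng c. cw c i) * S m P"
      by (subst sum_distrib_right[symmetric]) (simp add: valid_cw_nonneg[OF v])
    also have "\<dots> = S m P" by (simp add: valid_sum[OF v])
    finally show ?thesis .
  qed
  have cmpos: "cm m P > 0" for m P
    unfolding cm_def by (simp add: add_pos_nonneg)
  have cmS: "ennreal (cm m P) * S m P \<le> ennreal ((1/2)^m)" if P: "P \<in> Ps" for m P
  proof (cases "S m P" rule: ennreal_cases)
    case (real s)
    have "cm m P * s = (1/2)^m * (s / (1 + s))"
      using real by (simp add: cm_def power_divide)
    also have "\<dots> \<le> (1/2)^m * 1"
      using real by (intro mult_left_mono) auto
    finally show ?thesis using real cmpos[of m P] by (simp add: ennreal_mult[symmetric])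
  next
    case top thus ?thesis using Sfin[OF P, of m] by simp
  qed
  have geo: "(\<Sum>m. ennreal ((1/2::real)^m)) = ennreal 2"
    by (rule suminf_ennreal_eq) (use geometric_sums[of "1/2::real"] in auto)
  have \<Psi>le: "\<Psi> P c \<le> ennreal 2" if P: "P \<in> Ps" and v: "valid n c" for P c n
  proof -
    have "\<Psi> P c \<le> (\<Sum>m. ennreal ((1/2::real)^m))"
      unfolding \<Psi>_def
    proof (rule suminf_le[OF _ summableI summableI])
      fix m
      show "ennreal (cm m P) * Q m P c \<le> ennreal ((1/2)^m)"
        by (rule order_trans[OF mult_left_mono[OF Qle[OF P v]] cmS[OF P]]) simp
    qed
    thus ?thesis using geo by simp
  qed
  have Ale: "A n P \<le> \<Psi> P c" if v: "valid n c" for n P c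
    unfolding A_def by (rule INF_lower2[of "to_nat c"]) (simp_all add: \<Psi>v_def v)
  have valid1: "valid n (n, [1])" for n by (simp add: valid_def)
  have Afin: "A n P \<le> ennreal 2" if P: "P \<in> Ps" for n P
    using Ale[OF valid1] \<Psi>le[OF P valid1] by (rule order_trans)
  have bestP: "valid n (best n P) \<and> \<Psi> P (best n P) \<le> A n P + ennreal (1 / (real n + 1))"
    if P: "P \<in> Ps" for n P
  proof -
    have "A n P \<noteq> \<top>" using Afin[OF P, of n] by (auto simp: top_unique)
    hence "A n P < A n P + ennreal (1 / (real n + 1))" by simp
    hence "(INF k. \<Psi>v n P k) < A n P + ennreal (1 / (real n + 1))" by (simp add: A_def)
    then obtain k where k: "\<Psi>v n P k < A n P + ennreal (1 / (real n + 1))"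
      by (auto simp: INF_less_iff)
    hence "valid n (from_nat k) \<and> \<Psi> P (from_nat k) \<le> A n P + ennreal (1 / (real n + 1))"
      by (auto simp: \<Psi>v_def split: if_splits)
    hence "valid n (from_nat (sel n P)) \<and> \<Psi> P (from_nat (sel n P)) \<le> A n P + ennreal (1 / (real n + 1))"
      unfolding sel_def by (rule LeastI)
    thus ?thesis by (simp add: best_def)
  qed
  have Amono: "A n P \<le> A n' P" if "n \<le> n'" for n n' P
    unfolding A_def
  proof (rule INF_mono)
    fix k
    show "\<exists>k'\<in>UNIV. \<Psi>v n P k' \<le> \<Psi>v n' P k"
      by (intro bexI[of _ k]) (auto simp: \<Psi>v_def that intro: valid_mono)
  qed
  have conv: "Lp_convergent 2 P (\<lambda>n. comb (best n P) (\<lambda>i. f m i P))" if P: "P \<in> Ps" for P m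
  proof -
    note fPm[OF P, measurable]
    define G where "G n = comb (best n P) (\<lambda>i. f m i P)" for n
    have Gm[measurable]: "G n \<in> borel_measurable P" for n unfolding G_def by (rule combm[OF P])
    define a where "a k = enn2real (A k P)" for k
    define \<psi> where "\<psi> k = enn2real (\<Psi> P (best k P))" for k
    have vb: "valid k (best k P)" for k using bestP[OF P] by blast
    have Aeq: "A k P = ennreal (a k)" for k
      using Afin[OF P, of k] unfolding a_def by (cases "A k P" rule: ennreal_cases) (auto simp: top_unique)
    have \<Psi>eq: "\<Psi> P (best k P) = ennreal (\<psi> k)" for k
      using \<Psi>le[OF P vb[of k]] unfolding \<psi>_def by (cases "\<Psi> P (best k P)" rule: ennreal_cases) (auto simp: top_unique)
    have a_nn: "0 \<le> a k" for k by (simp add: a_def)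
    have \<psi>_nn: "0 \<le> \<psi> k" for k by (simp add: \<psi>_def)
    have a_le2: "a k \<le> 2" for k using Afin[OF P, of k] Aeq[of k] ennreal_le_iff[of 2 "a k"] by simp
    have inc: "incseq a"
    proof (rule incseq_SucI)
      fix k show "a k \<le> a (Suc k)" using Amono[of k "Suc k" P] a_nn[of "Suc k"] by (simp add: Aeq)
    qed
    obtain \<alpha> where \<alpha>: "a \<longlonglongrightarrow> \<alpha>" "\<forall>i. a i \<le> \<alpha>"
      using incseq_convergent[OF inc, of 2] a_le2 by blast
    have \<psi>le: "\<psi> k \<le> a k + 1 / (real k + 1)" for k
    proof -
      have "ennreal (\<psi> k) \<le> ennreal (a k) + ennreal (1 / (real k + 1))"
        using bestP[OF P, of k] by (simp add: Aeq \<Psi>eq)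
      also have "\<dots> = ennreal (a k + 1 / (real k + 1))" by (rule ennreal_plus[symmetric]) (auto simp: a_nn)
      finally have "ennreal (\<psi> k) \<le> ennreal (a k + 1 / (real k + 1))" .
      moreover have "0 \<le> a k + 1 / (real k + 1)" using a_nn[of k] by simp
      ultimately show ?thesis using ennreal_le_iff by blast
    qed
    have key: "(\<integral>\<^sup>+\<omega>. ennreal (norm (G k \<omega> - G l \<omega>) powr 2) \<partial>P)
                 \<le> ennreal (4 / cm m P * ((\<psi> k + \<psi> l) / 2 - a (min k l)))" for k l
    proof -
      let ?c1 = "best k P" and ?c2 = "best l P"
      obtain c where c: "valid (min k l) c" "\<forall>i. cw c i = (cw ?c1 i + cw ?c2 i) / 2"
        "rng c \<subseteq> rng ?c1 \<union> rng ?c2 \<union> {min (fst ?c1) (fst ?c2)..<max (fst ?c1 + length (snd ?c1)) (fst ?c2 + length (snd ?c2))}"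
        using midpoint_cand[OF vb[of k] vb[of l]] by blast
      have cmid: "comb c (\<lambda>i. f m' i P) \<omega> = (1/2) *\<^sub>R (comb ?c1 (\<lambda>i. f m' i P) \<omega> + comb ?c2 (\<lambda>i. f m' i P) \<omega>)" for m' \<omega>
        by (rule comb_mid[OF c(2) c(3)]) simp
      define Qd where "Qd m' = (\<integral>\<^sup>+\<omega>. ennreal ((norm ((1/2) *\<^sub>R (comb ?c1 (\<lambda>i. f m' i P) \<omega> - comb ?c2 (\<lambda>i. f m' i P) \<omega>)))\<^sup>2) \<partial>P)" for m'
      have id1: "Qd m' + Q m' P c = ennreal (1/2) * (Q m' P ?c1 + Q m' P ?c2)" for m'
      proof -
        note combm[OF P, measurable]
        have "Qd m' + Q m' P c = (\<integral>\<^sup>+\<omega>. ennreal ((norm ((1/2) *\<^sub>R (comb ?c1 (\<lambda>i. f m' i P) \<omega> - comb ?c2 (\<lambda>i. f m' i P) \<omega>)))\<^sup>2)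
              + ennreal ((norm ((1/2) *\<^sub>R (comb ?c1 (\<lambda>i. f m' i P) \<omega> + comb ?c2 (\<lambda>i. f m' i P) \<omega>)))\<^sup>2) \<partial>P)"
          unfolding Qd_def Q_def cmid by (rule nn_integral_add[symmetric]) measurable
        also have "\<dots> = (\<integral>\<^sup>+\<omega>. ennreal (1/2) * (ennreal ((norm (comb ?c1 (\<lambda>i. f m' i P) \<omega>))\<^sup>2) + ennreal ((norm (comb ?c2 (\<lambda>i. f m' i P) \<omega>))\<^sup>2)) \<partial>P)"
        proof (rule nn_integral_cong)
          fix \<omega>
          let ?x = "comb ?c1 (\<lambda>i. f m' i P) \<omega>" and ?y = "comb ?c2 (\<lambda>i. f m' i P) \<omega>"
          show "ennreal ((norm ((1/2) *\<^sub>R (?x - ?y)))\<^sup>2) + ennreal ((norm ((1/2) *\<^sub>R (?x + ?y)))\<^sup>2)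
              = ennreal (1/2) * (ennreal ((norm ?x)\<^sup>2) + ennreal ((norm ?y)\<^sup>2))"
            by (rule ennreal_par)
        qed
        also have "\<dots> = ennreal (1/2) * (\<integral>\<^sup>+\<omega>. (ennreal ((norm (comb ?c1 (\<lambda>i. f m' i P) \<omega>))\<^sup>2) + ennreal ((norm (comb ?c2 (\<lambda>i. f m' i P) \<omega>))\<^sup>2)) \<partial>P)"
          by (rule nn_integral_cmult) measurable
        also have "(\<integral>\<^sup>+\<omega>. (ennreal ((norm (comb ?c1 (\<lambda>i. f m' i P) \<omega>))\<^sup>2) + ennreal ((norm (comb ?c2 (\<lambda>i. f m' i P) \<omega>))\<^sup>2)) \<partial>P)
            = Q m' P ?c1 + Q m' P ?c2"
          unfolding Q_def by (rule nn_integral_add) measurable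
        finally show ?thesis .
      qed
      have sumid: "(\<Sum>m'. ennreal (cm m' P) * Qd m') + \<Psi> P c = ennreal (1/2) * (\<Psi> P ?c1 + \<Psi> P ?c2)"
      proof -
        have "(\<Sum>m'. ennreal (cm m' P) * Qd m') + \<Psi> P c = (\<Sum>m'. ennreal (cm m' P) * Qd m' + ennreal (cm m' P) * Q m' P c)"
          unfolding \<Psi>_def by (rule suminf_add[OF summableI summableI])
        also have "\<dots> = (\<Sum>m'. ennreal (1/2) * (ennreal (cm m' P) * Q m' P ?c1 + ennreal (cm m' P) * Q m' P ?c2))"
        proof (rule suminf_cong)
          fix m'
          have "ennreal (cm m' P) * Qd m' + ennreal (cm m' P) * Q m' P c = ennreal (cm m' P) * (Qd m' + Q m' P c)"
            by (simp add: distrib_left)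
          also have "\<dots> = ennreal (cm m' P) * (ennreal (1/2) * (Q m' P ?c1 + Q m' P ?c2))" by (simp add: id1)
          also have "\<dots> = ennreal (1/2) * (ennreal (cm m' P) * Q m' P ?c1 + ennreal (cm m' P) * Q m' P ?c2)"
            by (simp add: distrib_left mult_ac)
          finally show "ennreal (cm m' P) * Qd m' + ennreal (cm m' P) * Q m' P c
            = ennreal (1/2) * (ennreal (cm m' P) * Q m' P ?c1 + ennreal (cm m' P) * Q m' P ?c2)" .
        qed
        also have "\<dots> = ennreal (1/2) * (\<Sum>m'. ennreal (cm m' P) * Q m' P ?c1 + ennreal (cm m' P) * Q m' P ?c2)"
          by (rule ennreal_suminf_cmult)
        also have "\<dots> = ennreal (1/2) * (\<Psi> P ?c1 + \<Psi> P ?c2)"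
          unfolding \<Psi>_def by (simp add: suminf_add[OF summableI summableI])
        finally show ?thesis .
      qed
      have single: "ennreal (cm m P) * Qd m \<le> (\<Sum>m'. ennreal (cm m' P) * Qd m')"
        using sum_le_suminf[OF summableI, of "{m}" "\<lambda>m'. ennreal (cm m' P) * Qd m'"] by simp
      have "ennreal (cm m P) * Qd m + ennreal (a (min k l)) \<le> (\<Sum>m'. ennreal (cm m' P) * Qd m') + \<Psi> P c"
        using single Ale[OF c(1), of P] by (intro add_mono) (simp_all add: Aeq)
      also have "\<dots> = ennreal (1/2) * (ennreal (\<psi> k) + ennreal (\<psi> l))"
        by (simp only: sumid \<Psi>eq)
      also have "ennreal (\<psi> k) + ennreal (\<psi> l) = ennreal (\<psi> k + \<psi> l)"
        by (rule ennreal_plus[symmetric]) (auto simp: \<psi>_nn)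
      also have "ennreal (1/2) * ennreal (\<psi> k + \<psi> l) = ennreal (1/2 * (\<psi> k + \<psi> l))"
        by (rule ennreal_mult[symmetric]) (auto simp: \<psi>_nn add_nonneg_nonneg)
      also have "1/2 * (\<psi> k + \<psi> l) = (\<psi> k + \<psi> l) / 2" by simp
      finally have ineq: "ennreal (cm m P) * Qd m + ennreal (a (min k l)) \<le> ennreal ((\<psi> k + \<psi> l) / 2)" .
      obtain q where q: "Qd m = ennreal q" "0 \<le> q"
      proof (cases "Qd m" rule: ennreal_cases)
        case top
        hence "ennreal (cm m P) * Qd m = \<top>" using cmpos[of m P] by (simp add: ennreal_mult_top)
        with ineq show ?thesis by (simp add: top_unique)
      qed auto
      have "cm m P * q + a (min k l) \<le> (\<psi> k + \<psi> l) / 2"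
        using ineq q cmpos[of m P] a_nn[of "min k l"] \<psi>_nn[of k] \<psi>_nn[of l]
        by (simp add: ennreal_plus[symmetric] ennreal_mult[symmetric] ennreal_le_iff del: ennreal_plus)
      hence qle: "4 * q \<le> 4 / cm m P * ((\<psi> k + \<psi> l) / 2 - a (min k l))"
        using cmpos[of m P] by (simp add: field_simps)
      have "(\<integral>\<^sup>+\<omega>. ennreal (norm (G k \<omega> - G l \<omega>) powr 2) \<partial>P) = (\<integral>\<^sup>+\<omega>. ennreal 4 * ennreal ((norm ((1/2) *\<^sub>R (G k \<omega> - G l \<omega>)))\<^sup>2) \<partial>P)"
      proof (rule nn_integral_cong)
        fix \<omega>
        have eq4: "norm (G k \<omega> - G l \<omega>) powr 2 = 4 * (norm ((1/2) *\<^sub>R (G k \<omega> - G l \<omega>)))\<^sup>2"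
          by (simp add: norm_powr2 power_divide)
        show "ennreal (norm (G k \<omega> - G l \<omega>) powr 2) = ennreal 4 * ennreal ((norm ((1/2) *\<^sub>R (G k \<omega> - G l \<omega>)))\<^sup>2)"
          unfolding eq4 by (rule ennreal_mult) auto
      qed
      also have "\<dots> = ennreal 4 * Qd m"
        unfolding Qd_def G_def by (rule nn_integral_cmult) (use combm[OF P] in measurable)
      also have "\<dots> = ennreal (4 * q)" using q by (simp add: ennreal_mult)
      also have "\<dots> \<le> ennreal (4 / cm m P * ((\<psi> k + \<psi> l) / 2 - a (min k l)))"
        using qle by (rule ennreal_leI)
      finally show ?thesis .
    qed
    have "Lp_convergent 2 P G"
    proof (rule Lp_complete)
      show "(0::real) < 2" by simp
      show "\<And>n. G n \<in> borel_measurable P" by (rule Gm)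
    next
      fix n
      have "(\<integral>\<^sup>+x. ennreal (norm (G n x) powr 2) \<partial>P) = Q m P (best n P)"
        by (simp add: Q_def G_def norm_powr2)
      also have "\<dots> \<le> S m P" by (rule Qle[OF P vb])
      also have "\<dots> < \<infinity>" by (rule Sfin[OF P])
      finally show "(\<integral>\<^sup>+x. ennreal (norm (G n x) powr 2) \<partial>P) < \<infinity>" .
    next
      fix e :: real assume e: "e > 0"
      define \<delta> where "\<delta> = e * cm m P / 16"
      have \<delta>: "\<delta> > 0" using e cmpos[of m P] by (simp add: \<delta>_def)
      obtain K1 where K1: "\<And>K. K \<ge> K1 \<Longrightarrow> \<alpha> - \<delta> < a K"
        using order_tendstoD(1)[OF \<alpha>(1), of "\<alpha> - \<delta>"] \<delta> by (auto simp: eventually_sequentially)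
      obtain K0 :: nat where K0: "1 / \<delta> < real K0" using reals_Archimedean2 by blast
      define K where "K = max K0 K1"
      have smallK: "1 / (real k + 1) < \<delta>" if "k \<ge> K" for k
      proof -
        have "1 / \<delta> < real k + 1" using K0 that by (simp add: K_def)
        thus ?thesis using \<delta> by (simp add: field_simps)
      qed
      show "\<exists>N. \<forall>m'\<ge>N. \<forall>n\<ge>N. (\<integral>\<^sup>+x. ennreal (norm (G m' x - G n x) powr 2) \<partial>P) < ennreal e"
      proof (intro exI allI impI)
        fix k l assume kl: "K \<le> k" "K \<le> l"
        have "a K \<le> a (min k l)" using inc kl by (simp add: incseq_def)
        hence amin: "\<alpha> - \<delta> < a (min k l)" using K1[of K] by (simp add: K_def)
        have "\<psi> k \<le> \<alpha> + \<delta>" using \<psi>le[of k] \<alpha>(2)[rule_format, of k] smallK[OF kl(1)] by linarith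
        moreover have "\<psi> l \<le> \<alpha> + \<delta>" using \<psi>le[of l] \<alpha>(2)[rule_format, of l] smallK[OF kl(2)] by linarith
        ultimately have X: "(\<psi> k + \<psi> l) / 2 - a (min k l) \<le> 2 * \<delta>" using amin by (simp add: field_simps)
        have "4 / cm m P * ((\<psi> k + \<psi> l) / 2 - a (min k l)) \<le> 4 / cm m P * (2 * \<delta>)"
          using X cmpos[of m P] by (intro mult_left_mono) auto
        also have "\<dots> = e / 2" using cmpos[of m P] by (simp add: \<delta>_def field_simps)
        finally have "4 / cm m P * ((\<psi> k + \<psi> l) / 2 - a (min k l)) < e" using e by linarith
        hence "ennreal (4 / cm m P * ((\<psi> k + \<psi> l) / 2 - a (min k l))) < ennreal e"
          using e by (intro ennreal_lessI)
        thus "(\<integral>\<^sup>+x. ennreal (norm (G k x - G l x) powr 2) \<partial>P) < ennreal e"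
          using key[of k l] by (rule le_less_trans[rotated])
      qed
    qed
    thus ?thesis by (simp add: G_def[abs_def])
  qed
  have rngN: "rng (best n P) \<subseteq> {n..N n P}" if P: "P \<in> Ps" for n P
    using bestP[OF P, of n] by (auto simp: rng_def N_def valid_def)
  have eqc: "conv_comb N lam (f m) n P = comb (best n P) (\<lambda>i. f m i P)" if P: "P \<in> Ps" for n P m
    by (rule ext) (simp add: conv_comb_def lam_def comb_super[OF _ rngN[OF P]])
  have cwts: "conv_weights Ps N lam"
    unfolding conv_weights_def
  proof (intro conjI)
    show "\<forall>n. N n \<in> measurable ?M (count_space UNIV)"
      unfolding N_def best_def by (intro allI selc) simp
    show "\<forall>n i. lam n i \<in> borel_measurable ?M"
      unfolding lam_def best_def by (intro allI selc) simp
    show "\<forall>n. \<forall>P\<in>Ps. n \<le> N n P \<and> (\<forall>i. 0 \<le> lam n i P \<and> lam n i P \<le> 1) \<and>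
        (\<Sum>i=n..N n P. lam n i P) = 1 \<and> (\<forall>i. i \<notin> {n..N n P} \<longrightarrow> lam n i P = 0)"
    proof (intro allI ballI)
      fix n P assume P: "P \<in> Ps"
      have v: "valid n (best n P)" using bestP[OF P] by blast
      have 1: "n \<le> N n P" using v unfolding N_def valid_def by (cases "snd (best n P)") auto
      have 2: "\<forall>i. 0 \<le> lam n i P \<and> lam n i P \<le> 1"
        using valid_cw_nonneg[OF v] valid_cw_le1[OF v] by (simp add: lam_def)
      have "(\<Sum>i = n..N n P. lam n i P) = (\<Sum>i\<in>rng (best n P). cw (best n P) i)"
        unfolding lam_def using rngN[OF P, of n] by (intro sum.mono_neutral_right) (auto simp: cw_out)
      hence 3: "(\<Sum>i = n..N n P. lam n i P) = 1" by (simp add: valid_sum[OF v])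
      have 4: "\<forall>i. i \<notin> {n..N n P} \<longrightarrow> lam n i P = 0"
        using rngN[OF P, of n] by (auto simp: lam_def intro!: cw_out)
      show "n \<le> N n P \<and> (\<forall>i. 0 \<le> lam n i P \<and> lam n i P \<le> 1) \<and>
        (\<Sum>i=n..N n P. lam n i P) = 1 \<and> (\<forall>i. i \<notin> {n..N n P} \<longrightarrow> lam n i P = 0)"
        using 1 2 3 4 by blast
    qed
  qed
  show ?thesis
    using cwts conv eqc by (intro exI[of _ N] exI[of _ lam]) auto
qed



lemma ennreal_le_lin1:
  assumes "0 \<le> a" "0 \<le> b" "0 \<le> c" "x \<le> a + b * c"
  shows "ennreal x \<le> ennreal a + ennreal b * ennreal c"
proof -
  have "ennreal x \<le> ennreal (a + b * c)" using assms(4) by (rule ennreal_leI)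
  also have "\<dots> = ennreal a + ennreal (b * c)" using assms by (intro ennreal_plus) auto
  also have "ennreal (b * c) = ennreal b * ennreal c" using assms by (intro ennreal_mult) auto
  finally show ?thesis .
qed

lemma ennreal_le_lin2:
  assumes "0 \<le> a" "0 \<le> b" "0 \<le> c" "x \<le> c * (a + b)"
  shows "ennreal x \<le> ennreal c * (ennreal a + ennreal b)"
proof -
  have "ennreal x \<le> ennreal (c * (a + b))" using assms(4) by (rule ennreal_leI)
  also have "\<dots> = ennreal c * ennreal (a + b)" using assms by (intro ennreal_mult) auto
  also have "ennreal (a + b) = ennreal a + ennreal b" using assms by (intro ennreal_plus) auto
  finally show ?thesis .
qed

lemma L1_from_L2:
  fixes u :: "'a \<Rightarrow> 'b::real_normed_vector"
  assumes P: "prob_space P" and um: "u \<in> borel_measurable P" and d: "\<delta> > 0"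
  shows "(\<integral>\<^sup>+x. ennreal (norm (u x)) \<partial>P) \<le> ennreal \<delta> + ennreal (1/\<delta>) * (\<integral>\<^sup>+x. ennreal (norm (u x) powr 2) \<partial>P)"
proof -
  have "(\<integral>\<^sup>+x. ennreal (norm (u x)) \<partial>P) \<le> (\<integral>\<^sup>+x. ennreal \<delta> + ennreal (1/\<delta>) * ennreal (norm (u x) powr 2) \<partial>P)"
  proof (rule nn_integral_mono)
    fix x
    have "norm (u x) \<le> \<delta> + (1/\<delta>) * (norm (u x))\<^sup>2"
    proof (cases "norm (u x) \<le> \<delta>")
      case True thus ?thesis using d by (simp add: add_increasing2)
    next
      case False
      hence "norm (u x) * \<delta> \<le> norm (u x) * norm (u x)" by (intro mult_left_mono) auto
      hence "norm (u x) \<le> (1/\<delta>) * (norm (u x))\<^sup>2" using d by (simp add: field_simps power2_eq_square)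
      thus ?thesis using d by simp
    qed
    thus "ennreal (norm (u x)) \<le> ennreal \<delta> + ennreal (1/\<delta>) * ennreal (norm (u x) powr 2)"
      using d by (intro ennreal_le_lin1) (auto simp: norm_powr2)
  qed
  also have "\<dots> = (\<integral>\<^sup>+x. ennreal \<delta> \<partial>P) + (\<integral>\<^sup>+x. ennreal (1/\<delta>) * ennreal (norm (u x) powr 2) \<partial>P)"
    using um by (intro nn_integral_add) measurable
  also have "(\<integral>\<^sup>+x. ennreal (1/\<delta>) * ennreal (norm (u x) powr 2) \<partial>P) = ennreal (1/\<delta>) * (\<integral>\<^sup>+x. ennreal (norm (u x) powr 2) \<partial>P)"
    using um by (intro nn_integral_cmult) measurable
  also have "(\<integral>\<^sup>+x. ennreal \<delta> \<partial>P) = ennreal \<delta>"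
    using P by (simp add: prob_space.emeasure_space_1)
  finally show ?thesis .
qed

lemma L2_cauchy:
  fixes g :: "nat \<Rightarrow> 'a \<Rightarrow> 'b::euclidean_space"
  assumes conv: "Lp_convergent 2 P g" and gm: "\<And>n. g n \<in> borel_measurable P" and e: "e > 0"
  shows "\<exists>N. \<forall>k\<ge>N. \<forall>l\<ge>N. (\<integral>\<^sup>+x. ennreal (norm (g k x - g l x) powr 2) \<partial>P) < ennreal e"
proof -
  obtain h where hm: "h \<in> borel_measurable P"
    and lim: "(\<lambda>n. \<integral>\<^sup>+x. ennreal (norm (g n x - h x) powr 2) \<partial>P) \<longlonglongrightarrow> 0"
    using conv unfolding Lp_convergent_def by blast
  note gm[measurable] hm[measurable]
  have "eventually (\<lambda>n. (\<integral>\<^sup>+x. ennreal (norm (g n x - h x) powr 2) \<partial>P) < ennreal (e/16)) sequentially"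
    using order_tendstoD(2)[OF lim] e by simp
  then obtain N where N: "\<And>n. n \<ge> N \<Longrightarrow> (\<integral>\<^sup>+x. ennreal (norm (g n x - h x) powr 2) \<partial>P) < ennreal (e/16)"
    by (auto simp: eventually_sequentially)
  show ?thesis
  proof (intro exI allI impI)
    fix k l assume kl: "N \<le> k" "N \<le> l"
    have "(\<integral>\<^sup>+x. ennreal (norm (g k x - g l x) powr 2) \<partial>P)
        \<le> (\<integral>\<^sup>+x. ennreal 4 * (ennreal (norm (g k x - h x) powr 2) + ennreal (norm (g l x - h x) powr 2)) \<partial>P)"
    proof (rule nn_integral_mono)
      fix x
      have "norm (g k x - g l x) powr 2 = norm ((g k x - h x) + (h x - g l x)) powr 2" by simp
      also have "\<dots> \<le> 2 powr 2 * (norm (g k x - h x) powr 2 + norm (h x - g l x) powr 2)"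
        by (rule quasi_tri) simp
      finally have "norm (g k x - g l x) powr 2 \<le> 4 * (norm (g k x - h x) powr 2 + norm (g l x - h x) powr 2)"
        by (simp add: norm_minus_commute)
      thus "ennreal (norm (g k x - g l x) powr 2) \<le> ennreal 4 * (ennreal (norm (g k x - h x) powr 2) + ennreal (norm (g l x - h x) powr 2))"
        by (intro ennreal_le_lin2) auto
    qed
    also have "\<dots> = ennreal 4 * (\<integral>\<^sup>+x. (ennreal (norm (g k x - h x) powr 2) + ennreal (norm (g l x - h x) powr 2)) \<partial>P)"
      by (rule nn_integral_cmult) measurable
    also have "(\<integral>\<^sup>+x. (ennreal (norm (g k x - h x) powr 2) + ennreal (norm (g l x - h x) powr 2)) \<partial>P)
       = (\<integral>\<^sup>+x. ennreal (norm (g k x - h x) powr 2) \<partial>P) + (\<integral>\<^sup>+x. ennreal (norm (g l x - h x) powr 2) \<partial>P)"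
      by (rule nn_integral_add) measurable
    finally have "(\<integral>\<^sup>+x. ennreal (norm (g k x - g l x) powr 2) \<partial>P) \<le> ennreal 4 * ((\<integral>\<^sup>+x. ennreal (norm (g k x - h x) powr 2) \<partial>P) + (\<integral>\<^sup>+x. ennreal (norm (g l x - h x) powr 2) \<partial>P))" .
    also have "\<dots> \<le> ennreal 4 * (ennreal (e/16) + ennreal (e/16))"
      using N[OF kl(1)] N[OF kl(2)] by (intro mult_left_mono add_mono) auto
    also have "ennreal (e/16) + ennreal (e/16) = ennreal (e/8)"
      using e by (subst ennreal_plus[symmetric]) auto
    also have "ennreal 4 * ennreal (e/8) = ennreal (e/2)"
      using e by (subst ennreal_mult[symmetric]) auto
    also have "\<dots> < ennreal e" using e by (intro ennreal_lessI) auto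
    finally show "(\<integral>\<^sup>+x. ennreal (norm (g k x - g l x) powr 2) \<partial>P) < ennreal e" .
  qed
qed



lemma part_iii:
  fixes Ps :: "('a::{metric_space, second_countable_topology}) measure set"
    and f :: "nat \<Rightarrow> 'a measure \<Rightarrow> 'a \<Rightarrow> 'b::euclidean_space"
  assumes Ps: "Ps \<in> sets (prob_algebra (borel :: 'a measure))"
    and fmeas: "\<And>n. (\<lambda>(P, \<omega>). f n P \<omega>) \<in> borel_measurable (PM Ps \<Otimes>\<^sub>M (borel :: 'a measure))"
    and ui: "\<And>P. P \<in> Ps \<Longrightarrow> unif_integrable P (\<lambda>n. f n P)"
  shows "\<exists>N lam. conv_weights Ps N lam \<and> (\<forall>P\<in>Ps. Lp_convergent 1 P (\<lambda>n. conv_comb N lam f n P))"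
proof -
  let ?M = "PM Ps"
  have fm[measurable]: "(\<lambda>x. f n (fst x) (snd x)) \<in> borel_measurable (?M \<Otimes>\<^sub>M borel)" for n
    using fmeas[of n] by (simp add: split_beta')
  define ft where "ft m n P \<omega> = (if norm (f n P \<omega>) \<le> real m then f n P \<omega> else 0)" for m n P \<omega>
  have ftm: "(\<lambda>(P, \<omega>). ft m n P \<omega>) \<in> borel_measurable (?M \<Otimes>\<^sub>M borel)" for m n
    unfolding ft_def split_beta' by measurable
  have ftbd: "(SUP n. \<integral>\<^sup>+\<omega>. ennreal ((norm (ft m n P \<omega>))\<^sup>2) \<partial>P) < \<infinity>" if P: "P \<in> Ps" for m P
  proof -
    have prob: "prob_space P" by (rule PM_probD(1)[OF Ps P])
    have "(SUP n. \<integral>\<^sup>+\<omega>. ennreal ((norm (ft m n P \<omega>))\<^sup>2) \<partial>P) \<le> ennreal ((real m)\<^sup>2)"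
    proof (rule SUP_least)
      fix n
      have "(\<integral>\<^sup>+\<omega>. ennreal ((norm (ft m n P \<omega>))\<^sup>2) \<partial>P) \<le> (\<integral>\<^sup>+\<omega>. ennreal ((real m)\<^sup>2) \<partial>P)"
        by (intro nn_integral_mono ennreal_leI power_mono) (auto simp: ft_def)
      also have "\<dots> = ennreal ((real m)\<^sup>2)" using prob by (simp add: prob_space.emeasure_space_1)
      finally show "(\<integral>\<^sup>+\<omega>. ennreal ((norm (ft m n P \<omega>))\<^sup>2) \<partial>P) \<le> ennreal ((real m)\<^sup>2)" .
    qed
    thus ?thesis by (simp add: le_less_trans)
  qed
  obtain N lam where cw: "conv_weights Ps N lam"
    and c2: "\<forall>m. \<forall>P\<in>Ps. Lp_convergent 2 P (\<lambda>n. conv_comb N lam (ft m) n P)"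
    using part_ii[of Ps ft, OF Ps ftm ftbd] by blast
  have conv1: "Lp_convergent 1 P (\<lambda>n. conv_comb N lam f n P)" if P: "P \<in> Ps" for P
  proof -
    have prob: "prob_space P" by (rule PM_probD(1)[OF Ps P])
    have fPm[measurable]: "f n P \<in> borel_measurable P" for n by (rule slice_meas[OF Ps P fmeas])
    define g where "g n = conv_comb N lam f n P" for n
    define gt where "gt m n = conv_comb N lam (ft m) n P" for m n
    have gm[measurable]: "g n \<in> borel_measurable P" for n
      unfolding g_def by (rule slice_meas[OF Ps P conv_meas[OF cw fmeas]])
    have gtm[measurable]: "gt m n \<in> borel_measurable P" for m n
      unfolding gt_def by (rule slice_meas[OF Ps P conv_meas[OF cw ftm]])
    have cwP: "0 \<le> lam n i P" for n i using cw P unfolding conv_weights_def by blast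
    have sum1: "(\<Sum>i=n..N n P. lam n i P) = 1" for n using cw P unfolding conv_weights_def by blast
    have int_f: "(\<integral>\<^sup>+\<omega>. ennreal (norm (f i P \<omega>)) \<partial>P) < \<infinity>" for i
      using ui[OF P] unfolding unif_integrable_def integrable_iff_bounded by blast
    define T where "T K = (SUP n. \<integral>\<^sup>+\<omega>. indicator {x. K < norm (f n P x)} \<omega> * ennreal (norm (f n P \<omega>)) \<partial>P)" for K :: real
    have Tlim: "(T \<longlongrightarrow> 0) at_top" using ui[OF P] unfolding unif_integrable_def T_def by blast
    have normsum: "norm (conv_comb N lam u n P \<omega>) \<le> (\<Sum>i=n..N n P. lam n i P * norm (u i P \<omega>))"
      for u :: "nat \<Rightarrow> 'a measure \<Rightarrow> 'a \<Rightarrow> 'b" and n \<omega>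
    proof -
      have "norm (conv_comb N lam u n P \<omega>) \<le> (\<Sum>i=n..N n P. norm (lam n i P *\<^sub>R u i P \<omega>))"
        unfolding conv_comb_def by (rule norm_sum)
      also have "\<dots> = (\<Sum>i=n..N n P. lam n i P * norm (u i P \<omega>))"
        by (simp add: cwP abs_of_nonneg)
      finally show ?thesis .
    qed
    have intsum: "(\<integral>\<^sup>+\<omega>. ennreal (\<Sum>i=n..N n P. lam n i P * v i \<omega>) \<partial>P)
        = (\<Sum>i=n..N n P. ennreal (lam n i P) * (\<integral>\<^sup>+\<omega>. ennreal (v i \<omega>) \<partial>P))"
      if vm: "\<And>i. v i \<in> borel_measurable P" and vnn: "\<And>i \<omega>. 0 \<le> v i \<omega>" for v n
    proof -
      note vm[measurable]
      have "(\<integral>\<^sup>+\<omega>. ennreal (\<Sum>i=n..N n P. lam n i P * v i \<omega>) \<partial>P)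
          = (\<integral>\<^sup>+\<omega>. (\<Sum>i=n..N n P. ennreal (lam n i P) * ennreal (v i \<omega>)) \<partial>P)"
      proof (rule nn_integral_cong)
        fix \<omega>
        have "(\<Sum>i=n..N n P. ennreal (lam n i P) * ennreal (v i \<omega>)) = (\<Sum>i=n..N n P. ennreal (lam n i P * v i \<omega>))"
          by (intro sum.cong refl) (simp add: ennreal_mult cwP vnn)
        also have "\<dots> = ennreal (\<Sum>i=n..N n P. lam n i P * v i \<omega>)"
          by (rule sum_ennreal) (simp add: cwP vnn)
        finally show "ennreal (\<Sum>i=n..N n P. lam n i P * v i \<omega>) = (\<Sum>i=n..N n P. ennreal (lam n i P) * ennreal (v i \<omega>))" by simp
      qed
      also have "\<dots> = (\<Sum>i=n..N n P. (\<integral>\<^sup>+\<omega>. ennreal (lam n i P) * ennreal (v i \<omega>) \<partial>P))"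
        by (rule nn_integral_sum) measurable
      also have "\<dots> = (\<Sum>i=n..N n P. ennreal (lam n i P) * (\<integral>\<^sup>+\<omega>. ennreal (v i \<omega>) \<partial>P))"
        by (intro sum.cong refl nn_integral_cmult) measurable
      finally show ?thesis .
    qed
    have fin: "(\<integral>\<^sup>+\<omega>. ennreal (norm (g n \<omega>) powr 1) \<partial>P) < \<infinity>" for n
    proof -
      have "(\<integral>\<^sup>+\<omega>. ennreal (norm (g n \<omega>) powr 1) \<partial>P) \<le> (\<integral>\<^sup>+\<omega>. ennreal (\<Sum>i=n..N n P. lam n i P * norm (f i P \<omega>)) \<partial>P)"
        unfolding g_def by (intro nn_integral_mono ennreal_leI) (simp add: normsum)
      also have "\<dots> = (\<Sum>i=n..N n P. ennreal (lam n i P) * (\<integral>\<^sup>+\<omega>. ennreal (norm (f i P \<omega>)) \<partial>P))"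
        by (rule intsum) auto
      also have "\<dots> < \<infinity>"
        using int_f by (simp add: ennreal_mult_less_top less_top)
      finally show ?thesis .
    qed
    have diff: "(\<integral>\<^sup>+\<omega>. ennreal (norm (g n \<omega> - gt m n \<omega>)) \<partial>P) \<le> T (real m)" for n m
    proof -
      define v where "v i \<omega> = (if real m < norm (f i P \<omega>) then norm (f i P \<omega>) else 0)" for i \<omega>
      have vm: "v i \<in> borel_measurable P" for i unfolding v_def by measurable
      have "g n \<omega> - gt m n \<omega> = conv_comb N lam (\<lambda>i P \<omega>. f i P \<omega> - ft m i P \<omega>) n P \<omega>" for \<omega>
        by (simp add: g_def gt_def conv_comb_def sum_subtractf scaleR_diff_right)
      moreover have eqv: "norm (f i P \<omega> - ft m i P \<omega>) = v i \<omega>" for i \<omega>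
        by (simp add: ft_def v_def)
      ultimately have "norm (g n \<omega> - gt m n \<omega>) \<le> (\<Sum>i=n..N n P. lam n i P * v i \<omega>)" for \<omega>
        using normsum[of "\<lambda>i P \<omega>. f i P \<omega> - ft m i P \<omega>" n \<omega>] by (simp only: eqv)
      hence "(\<integral>\<^sup>+\<omega>. ennreal (norm (g n \<omega> - gt m n \<omega>)) \<partial>P) \<le> (\<integral>\<^sup>+\<omega>. ennreal (\<Sum>i=n..N n P. lam n i P * v i \<omega>) \<partial>P)"
        by (intro nn_integral_mono ennreal_leI)
      also have "\<dots> = (\<Sum>i=n..N n P. ennreal (lam n i P) * (\<integral>\<^sup>+\<omega>. ennreal (v i \<omega>) \<partial>P))"
        by (rule intsum[OF vm]) (simp add: v_def)
      also have "\<dots> \<le> (\<Sum>i=n..N n P. ennreal (lam n i P) * T (real m))"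
      proof (intro sum_mono mult_left_mono)
        fix i
        have "(\<integral>\<^sup>+\<omega>. ennreal (v i \<omega>) \<partial>P) = (\<integral>\<^sup>+\<omega>. indicator {x. real m < norm (f i P x)} \<omega> * ennreal (norm (f i P \<omega>)) \<partial>P)"
          by (intro nn_integral_cong) (simp add: v_def indicator_def)
        also have "\<dots> \<le> T (real m)" unfolding T_def by (rule SUP_upper) simp
        finally show "(\<integral>\<^sup>+\<omega>. ennreal (v i \<omega>) \<partial>P) \<le> T (real m)" .
      qed simp
      also have "\<dots> = ennreal (\<Sum>i=n..N n P. lam n i P) * T (real m)"
        by (subst sum_distrib_right[symmetric]) (simp add: cwP)
      also have "\<dots> = T (real m)" by (simp add: sum1)
      finally show ?thesis .
    qed
    have "Lp_convergent 1 P g"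
    proof (rule Lp_complete)
      show "(0::real) < 1" by simp
      show "\<And>n. g n \<in> borel_measurable P" by (rule gm)
      show "\<And>n. (\<integral>\<^sup>+\<omega>. ennreal (norm (g n \<omega>) powr 1) \<partial>P) < \<infinity>" by (rule fin)
    next
      fix e :: real assume e: "e > 0"
      have "eventually (\<lambda>K. T K < ennreal (e/4)) at_top"
        using order_tendstoD(2)[OF Tlim] e by simp
      then obtain K0 where K0: "\<And>K. K \<ge> K0 \<Longrightarrow> T K < ennreal (e/4)"
        by (auto simp: eventually_at_top_linorder)
      define m where "m = nat \<lceil>K0\<rceil>"
      have Tm: "T (real m) < ennreal (e/4)"
        by (rule K0) (simp add: m_def real_nat_ceiling_ge)
      have "Lp_convergent 2 P (gt m)"
        using c2 P unfolding gt_def[abs_def] by blast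
      then obtain N2 where N2: "\<And>k l. k \<ge> N2 \<Longrightarrow> l \<ge> N2 \<Longrightarrow>
          (\<integral>\<^sup>+x. ennreal (norm (gt m k x - gt m l x) powr 2) \<partial>P) < ennreal ((e/8)^2)"
        using L2_cauchy[of P "gt m" "(e/8)^2"] gtm e by auto
      show "\<exists>N. \<forall>k\<ge>N. \<forall>l\<ge>N. (\<integral>\<^sup>+x. ennreal (norm (g k x - g l x) powr 1) \<partial>P) < ennreal e"
      proof (intro exI allI impI)
        fix k l assume kl: "N2 \<le> k" "N2 \<le> l"
        have mid: "(\<integral>\<^sup>+x. ennreal (norm (gt m k x - gt m l x)) \<partial>P) \<le> ennreal (e/4)"
        proof -
          have "(\<integral>\<^sup>+x. ennreal (norm (gt m k x - gt m l x)) \<partial>P)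
              \<le> ennreal (e/8) + ennreal (1/(e/8)) * (\<integral>\<^sup>+x. ennreal (norm (gt m k x - gt m l x) powr 2) \<partial>P)"
            by (rule L1_from_L2[OF prob]) (use e in auto)
          also have "\<dots> \<le> ennreal (e/8) + ennreal (1/(e/8)) * ennreal ((e/8)^2)"
            using N2[OF kl] by (intro add_left_mono mult_left_mono) auto
          also have "\<dots> = ennreal (e/8 + 1/(e/8) * (e/8)^2)"
            using e by (simp add: ennreal_mult[symmetric] ennreal_plus)
          also have "e/8 + 1/(e/8) * (e/8)^2 = e/4" using e by (simp add: power2_eq_square)
          finally show ?thesis .
        qed
        have "(\<integral>\<^sup>+x. ennreal (norm (g k x - g l x) powr 1) \<partial>P)
            \<le> (\<integral>\<^sup>+x. ennreal (norm (g k x - gt m k x)) + ennreal (norm (gt m k x - gt m l x)) + ennreal (norm (g l x - gt m l x)) \<partial>P)"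
        proof (rule nn_integral_mono)
          fix x
          have "norm (g k x - g l x) \<le> norm (g k x - gt m k x) + norm (gt m k x - gt m l x) + norm (g l x - gt m l x)"
            using norm_triangle_ineq[of "g k x - gt m k x" "gt m k x - gt m l x"]
                  norm_triangle_ineq[of "g k x - gt m l x" "gt m l x - g l x"]
            by (simp add: norm_minus_commute[of "gt m l x"])
          thus "ennreal (norm (g k x - g l x) powr 1) \<le> ennreal (norm (g k x - gt m k x)) + ennreal (norm (gt m k x - gt m l x)) + ennreal (norm (g l x - gt m l x))"
            by (simp add: ennreal_plus[symmetric] ennreal_leI del: ennreal_plus)
        qed
        also have "\<dots> = (\<integral>\<^sup>+x. ennreal (norm (g k x - gt m k x)) \<partial>P) + (\<integral>\<^sup>+x. ennreal (norm (gt m k x - gt m l x)) \<partial>P) + (\<integral>\<^sup>+x. ennreal (norm (g l x - gt m l x)) \<partial>P)"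
          by (simp add: nn_integral_add)
        also have "\<dots> \<le> ennreal (e/4) + ennreal (e/4) + ennreal (e/4)"
          using diff[of k m] diff[of l m] Tm mid by (intro add_mono) auto
        also have "\<dots> = ennreal (3 * e / 4)" using e by (simp add: ennreal_plus[symmetric] del: ennreal_plus)
        also have "\<dots> < ennreal e" using e by (intro ennreal_lessI) auto
        finally show "(\<integral>\<^sup>+x. ennreal (norm (g k x - g l x) powr 1) \<partial>P) < ennreal e" .
      qed
    qed
    thus ?thesis by (simp add: g_def[abs_def])
  qed
  show ?thesis using cw conv1 by blast
qed

theorem proposition3p3:
  fixes Ps :: "('a::{metric_space, second_countable_topology}) measure set"
  assumes Ps_meas: "Ps \<in> sets (prob_algebra (borel :: 'a measure))"
  shows
  \<comment> \<open>(i)\<close>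
  "(\<forall>f :: nat \<Rightarrow> 'a measure \<Rightarrow> 'a \<Rightarrow> 'b::euclidean_space.
      (\<forall>n. (\<lambda>(P, \<omega>). f n P \<omega>) \<in> borel_measurable (PM Ps \<Otimes>\<^sub>M (borel :: 'a measure))) \<and>
      (\<forall>P\<in>Ps. (SUP n. \<integral>\<^sup>+\<omega>. ennreal ((norm (f n P \<omega>))\<^sup>2) \<partial>P) < \<infinity>)
      \<longrightarrow> (\<exists>N lam. conv_weights Ps N lam \<and>
            (\<forall>n. (\<lambda>(P, \<omega>). conv_comb N lam f n P \<omega>) \<in> borel_measurable (PM Ps \<Otimes>\<^sub>M (borel :: 'a measure))) \<and>
            (\<forall>n. \<forall>P\<in>Ps. \<forall>\<omega>. conv_comb N lam f n P \<omega> \<in> convex hull {f i P \<omega> | i. n \<le> i}) \<and>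
            (\<forall>P\<in>Ps. Lp_convergent 2 P (\<lambda>n. conv_comb N lam f n P))))
   \<and>
  \<comment> \<open>(ii)\<close>
   (\<forall>f :: nat \<Rightarrow> nat \<Rightarrow> 'a measure \<Rightarrow> 'a \<Rightarrow> 'b::euclidean_space.
      (\<forall>m n. (\<lambda>(P, \<omega>). f m n P \<omega>) \<in> borel_measurable (PM Ps \<Otimes>\<^sub>M (borel :: 'a measure))) \<and>
      (\<forall>m. \<forall>P\<in>Ps. (SUP n. \<integral>\<^sup>+\<omega>. ennreal ((norm (f m n P \<omega>))\<^sup>2) \<partial>P) < \<infinity>)
      \<longrightarrow> (\<exists>N lam. conv_weights Ps N lam \<and>
            (\<forall>m n. (\<lambda>(P, \<omega>). conv_comb N lam (f m) n P \<omega>) \<in> borel_measurable (PM Ps \<Otimes>\<^sub>M (borel :: 'a measure))) \<and>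
            (\<forall>m n. \<forall>P\<in>Ps. \<forall>\<omega>. conv_comb N lam (f m) n P \<omega> \<in> convex hull {f m i P \<omega> | i. n \<le> i}) \<and>
            (\<forall>m. \<forall>P\<in>Ps. Lp_convergent 2 P (\<lambda>n. conv_comb N lam (f m) n P))))
   \<and>
  \<comment> \<open>(iii)\<close>
   (\<forall>f :: nat \<Rightarrow> 'a measure \<Rightarrow> 'a \<Rightarrow> 'b::euclidean_space.
      (\<forall>n. (\<lambda>(P, \<omega>). f n P \<omega>) \<in> borel_measurable (PM Ps \<Otimes>\<^sub>M (borel :: 'a measure))) \<and>
      (\<forall>P\<in>Ps. unif_integrable P (\<lambda>n. f n P))
      \<longrightarrow> (\<exists>N lam. conv_weights Ps N lam \<and>
            (\<forall>n. (\<lambda>(P, \<omega>). conv_comb N lam f n P \<omega>) \<in> borel_measurable (PM Ps \<Otimes>\<^sub>M (borel :: 'a measure))) \<and>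
            (\<forall>n. \<forall>P\<in>Ps. \<forall>\<omega>. conv_comb N lam f n P \<omega> \<in> convex hull {f i P \<omega> | i. n \<le> i}) \<and>
            (\<forall>P\<in>Ps. Lp_convergent 1 P (\<lambda>n. conv_comb N lam f n P))))"
  proof (intro conjI)
  show "\<forall>f :: nat \<Rightarrow> nat \<Rightarrow> 'a measure \<Rightarrow> 'a \<Rightarrow> 'b::euclidean_space.
      (\<forall>m n. (\<lambda>(P, \<omega>). f m n P \<omega>) \<in> borel_measurable (PM Ps \<Otimes>\<^sub>M (borel :: 'a measure))) \<and>
      (\<forall>m. \<forall>P\<in>Ps. (SUP n. \<integral>\<^sup>+\<omega>. ennreal ((norm (f m n P \<omega>))\<^sup>2) \<partial>P) < \<infinity>)
      \<longrightarrow> (\<exists>N lam. conv_weights Ps N lam \<and>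
            (\<forall>m n. (\<lambda>(P, \<omega>). conv_comb N lam (f m) n P \<omega>) \<in> borel_measurable (PM Ps \<Otimes>\<^sub>M (borel :: 'a measure))) \<and>
            (\<forall>m n. \<forall>P\<in>Ps. \<forall>\<omega>. conv_comb N lam (f m) n P \<omega> \<in> convex hull {f m i P \<omega> | i. n \<le> i}) \<and>
            (\<forall>m. \<forall>P\<in>Ps. Lp_convergent 2 P (\<lambda>n. conv_comb N lam (f m) n P)))" (is "\<forall>f. ?H f \<longrightarrow> ?C f")
  proof (intro allI impI)
    fix f :: "nat \<Rightarrow> nat \<Rightarrow> 'a measure \<Rightarrow> 'a \<Rightarrow> 'b"
    assume H: "?H f"
    obtain N lam where cw: "conv_weights Ps N lam"
      and cv: "\<forall>m. \<forall>P\<in>Ps. Lp_convergent 2 P (\<lambda>n. conv_comb N lam (f m) n P)"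
      using part_ii[of Ps f] Ps_meas H by blast
    show "?C f"
    proof (intro exI[of _ N] exI[of _ lam] conjI)
      show "conv_weights Ps N lam" by (rule cw)
      show "\<forall>m n. (\<lambda>(P, \<omega>). conv_comb N lam (f m) n P \<omega>) \<in> borel_measurable (PM Ps \<Otimes>\<^sub>M (borel :: 'a measure))"
        using H by (intro allI conv_meas[OF cw]) blast
      show "\<forall>m n. \<forall>P\<in>Ps. \<forall>\<omega>. conv_comb N lam (f m) n P \<omega> \<in> convex hull {f m i P \<omega> | i. n \<le> i}"
        by (intro allI ballI conv_hull[OF cw])
    qed (use cv in blast)
  qed
  thus "\<forall>f :: nat \<Rightarrow> 'a measure \<Rightarrow> 'a \<Rightarrow> 'b::euclidean_space.
      (\<forall>n. (\<lambda>(P, \<omega>). f n P \<omega>) \<in> borel_measurable (PM Ps \<Otimes>\<^sub>M (borel :: 'a measure))) \<and>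
      (\<forall>P\<in>Ps. (SUP n. \<integral>\<^sup>+\<omega>. ennreal ((norm (f n P \<omega>))\<^sup>2) \<partial>P) < \<infinity>)
      \<longrightarrow> (\<exists>N lam. conv_weights Ps N lam \<and>
            (\<forall>n. (\<lambda>(P, \<omega>). conv_comb N lam f n P \<omega>) \<in> borel_measurable (PM Ps \<Otimes>\<^sub>M (borel :: 'a measure))) \<and>
            (\<forall>n. \<forall>P\<in>Ps. \<forall>\<omega>. conv_comb N lam f n P \<omega> \<in> convex hull {f i P \<omega> | i. n \<le> i}) \<and>
            (\<forall>P\<in>Ps. Lp_convergent 2 P (\<lambda>n. conv_comb N lam f n P)))"
  proof (intro allI impI)
    fix f :: "nat \<Rightarrow> 'a measure \<Rightarrow> 'a \<Rightarrow> 'b"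
    assume H: "(\<forall>n. (\<lambda>(P, \<omega>). f n P \<omega>) \<in> borel_measurable (PM Ps \<Otimes>\<^sub>M (borel :: 'a measure))) \<and>
      (\<forall>P\<in>Ps. (SUP n. \<integral>\<^sup>+\<omega>. ennreal ((norm (f n P \<omega>))\<^sup>2) \<partial>P) < \<infinity>)"
    obtain N lam where cw: "conv_weights Ps N lam"
      and cv: "\<forall>P\<in>Ps. Lp_convergent 2 P (\<lambda>n. conv_comb N lam f n P)"
      using part_ii[of Ps "\<lambda>m. f"] Ps_meas H by blast
    show "\<exists>N lam. conv_weights Ps N lam \<and>
            (\<forall>n. (\<lambda>(P, \<omega>). conv_comb N lam f n P \<omega>) \<in> borel_measurable (PM Ps \<Otimes>\<^sub>M (borel :: 'a measure))) \<and>
            (\<forall>n. \<forall>P\<in>Ps. \<forall>\<omega>. conv_comb N lam f n P \<omega> \<in> convex hull {f i P \<omega> | i. n \<le> i}) \<and>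
            (\<forall>P\<in>Ps. Lp_convergent 2 P (\<lambda>n. conv_comb N lam f n P))"
    proof (intro exI[of _ N] exI[of _ lam] conjI)
      show "conv_weights Ps N lam" by (rule cw)
      show "\<forall>n. (\<lambda>(P, \<omega>). conv_comb N lam f n P \<omega>) \<in> borel_measurable (PM Ps \<Otimes>\<^sub>M (borel :: 'a measure))"
        using H by (intro allI conv_meas[OF cw]) blast
      show "\<forall>n. \<forall>P\<in>Ps. \<forall>\<omega>. conv_comb N lam f n P \<omega> \<in> convex hull {f i P \<omega> | i. n \<le> i}"
        by (intro allI ballI conv_hull[OF cw])
    qed (use cv in blast)
  qed
  show "\<forall>f :: nat \<Rightarrow> 'a measure \<Rightarrow> 'a \<Rightarrow> 'b::euclidean_space.
      (\<forall>n. (\<lambda>(P, \<omega>). f n P \<omega>) \<in> borel_measurable (PM Ps \<Otimes>\<^sub>M (borel :: 'a measure))) \<and>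
      (\<forall>P\<in>Ps. unif_integrable P (\<lambda>n. f n P))
      \<longrightarrow> (\<exists>N lam. conv_weights Ps N lam \<and>
            (\<forall>n. (\<lambda>(P, \<omega>). conv_comb N lam f n P \<omega>) \<in> borel_measurable (PM Ps \<Otimes>\<^sub>M (borel :: 'a measure))) \<and>
            (\<forall>n. \<forall>P\<in>Ps. \<forall>\<omega>. conv_comb N lam f n P \<omega> \<in> convex hull {f i P \<omega> | i. n \<le> i}) \<and>
            (\<forall>P\<in>Ps. Lp_convergent 1 P (\<lambda>n. conv_comb N lam f n P)))"
  proof (intro allI impI)
    fix f :: "nat \<Rightarrow> 'a measure \<Rightarrow> 'a \<Rightarrow> 'b"
    assume H: "(\<forall>n. (\<lambda>(P, \<omega>). f n P \<omega>) \<in> borel_measurable (PM Ps \<Otimes>\<^sub>M (borel :: 'a measure))) \<and>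
      (\<forall>P\<in>Ps. unif_integrable P (\<lambda>n. f n P))"
    obtain N lam where cw: "conv_weights Ps N lam"
      and cv: "\<forall>P\<in>Ps. Lp_convergent 1 P (\<lambda>n. conv_comb N lam f n P)"
      using part_iii[of Ps f] Ps_meas H by blast
    show "\<exists>N lam. conv_weights Ps N lam \<and>
            (\<forall>n. (\<lambda>(P, \<omega>). conv_comb N lam f n P \<omega>) \<in> borel_measurable (PM Ps \<Otimes>\<^sub>M (borel :: 'a measure))) \<and>
            (\<forall>n. \<forall>P\<in>Ps. \<forall>\<omega>. conv_comb N lam f n P \<omega> \<in> convex hull {f i P \<omega> | i. n \<le> i}) \<and>
            (\<forall>P\<in>Ps. Lp_convergent 1 P (\<lambda>n. conv_comb N lam f n P))"
    proof (intro exI[of _ N] exI[of _ lam] conjI)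
      show "conv_weights Ps N lam" by (rule cw)
      show "\<forall>n. (\<lambda>(P, \<omega>). conv_comb N lam f n P \<omega>) \<in> borel_measurable (PM Ps \<Otimes>\<^sub>M (borel :: 'a measure))"
        using H by (intro allI conv_meas[OF cw]) blast
      show "\<forall>n. \<forall>P\<in>Ps. \<forall>\<omega>. conv_comb N lam f n P \<omega> \<in> convex hull {f i P \<omega> | i. n \<le> i}"
        by (intro allI ballI conv_hull[OF cw])
    qed (use cv in blast)
  qed
qed

end
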